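(* Let $\psi:[0,1]^p\to\mathbb R$ be continuous, let $K,K'\subset I:=\{1,\dots,p\}$ (possibly empty), and define on the space $\mathcal C_p$ of cumulative distribution functions on $[0,1]^p$ the map $$\Psi_{K,K'}(C):=\int\psi(\mathbf u)\,C_K(\mathbf u_K)\,C_{K'}(d\mathbf u_{K'})\,d\mathbf u_{I\setminus K'}.$$ Let $C$ be a $p$-dimensional copula such that the map $\chi(\mathbf u_{K'}):=\int\psi(\mathbf u)C_K(\mathbf u_K)\,d\mathbf u_{I\setminus K'}$ is of bounded variation on $[0,1]^{|K'|}$. Then $\Psi_{K,K'}:\mathcal C_p\to\mathbb R$ is Hadamard differentiable at $C$, tangentially to the set of real continuous functions on $[0,1]^p$, with derivative $$\Psi'_{K,K'}(C)(h)=\int\psi(\mathbf u)\,h_K(\mathbf u_K)\,C_{K'}(d\mathbf u_{K'})\,d\mathbf u_{I\setminus K'}+\int\psi(\mathbf u)\,C_K(\mathbf u_K)\,h_{K'}(d\mathbf u_{K'})\,d\mathbf u_{I\setminus K'}$$ for every continuous $h:[0,1]^p\to\mathbb R$.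
   Context: For $K\subset I$ and a function $G$ on $[0,1]^p$, $\mathbf u_K:=(u_j)_{j\in K}$ and $G_K(\mathbf u_K)$ denotes $G$ evaluated at the point whose coordinates in $K$ are $\mathbf u_K$ and whose other coordinates equal $1$ (so $C_K$ is the margin of $C$ on the coordinates in $K$). When $K'=\emptyset$ there is no integration with respect to $C_{K'}(d\mathbf u_{K'})$ (resp. $h_{K'}$); when $K'=I$ there is no integration with respect to $d\mathbf u_{I\setminus K'}$ (Lebesgue measure). When $h$ is not of bounded variation, the second integral in the derivative is defined via integration by parts (for multivariate functions of bounded variation in the sense of Hardy–Krause), transferring the integration onto $\chi$. *)

theory Defs
  imports "HOL-Analysis.Analysis" "HOL-Probability.Probability"
begin

text \<open>Points of [0,1]^p are vectors of type real^'n with p = CARD('n); the index set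
  I = {1..p} is the finite type 'n, i.e. UNIV :: 'n set.\<close>

text \<open>Margin: G_K(u_K) = G evaluated at the point with coordinates u_i (i in K) and 1 elsewhere.\<close>
definition marg :: "'n::finite set \<Rightarrow> (real^'n \<Rightarrow> real) \<Rightarrow> real^'n \<Rightarrow> real" where
  "marg K G u = G (\<chi> i. if i \<in> K then u$i else 1)"

definition mix :: "'n::finite set \<Rightarrow> real^'n \<Rightarrow> real^'n \<Rightarrow> real^'n" where
  "mix K' x w = (\<chi> i. if i \<in> K' then x$i else w$i)"

definition cdf_of :: "(real^'n::finite \<Rightarrow> real) \<Rightarrow> (real^'n) measure \<Rightarrow> bool" where
  "cdf_of C M \<longleftrightarrow> prob_space M \<and> sets M = sets borel \<and> emeasure M (cbox 0 1) = 1 \<and>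
     (\<forall>u\<in>cbox 0 1. C u = measure M (cbox 0 u))"

definition cdfs :: "(real^'n::finite \<Rightarrow> real) set" where
  "cdfs = {C. \<exists>M. cdf_of C M}"

definition cdf_measure :: "(real^'n::finite \<Rightarrow> real) \<Rightarrow> (real^'n) measure" where
  "cdf_measure C = (SOME M. cdf_of C M)"

definition copula :: "(real^'n::finite \<Rightarrow> real) \<Rightarrow> bool" where
  "copula C \<longleftrightarrow> C \<in> cdfs \<and> (\<forall>i. \<forall>t\<in>{0..1}. C (\<chi> j. if j = i then t else 1) = t)"

text \<open>chi(u_{K'}) = \<integral> psi(u) G_K(u_K) du_{I\K'} (depends only on the K'-coordinates of v).\<close>
definition chi :: "'n::finite set \<Rightarrow> 'n set \<Rightarrow> (real^'n \<Rightarrow> real) \<Rightarrow> (real^'n \<Rightarrow> real)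
    \<Rightarrow> real^'n \<Rightarrow> real" where
  "chi K K' \<psi> G v = (LINT w | lebesgue_on (cbox 0 1). \<psi> (mix K' v w) * marg K G (mix K' v w))"

text \<open>Psi_{K,K'}(C) = \<integral> psi(u) C_K(u_K) C_{K'}(du_{K'}) du_{I\K'}; the measure C_{K'}(du_{K'})
  is the law of the K'-coordinates under the distribution with cdf C.\<close>
definition Psi :: "'n::finite set \<Rightarrow> 'n set \<Rightarrow> (real^'n \<Rightarrow> real) \<Rightarrow> (real^'n \<Rightarrow> real) \<Rightarrow> real" where
  "Psi K K' \<psi> C = (LINT x | restrict_space (cdf_measure C) (cbox 0 1). chi K K' \<psi> C x)"

definition nxt :: "real set \<Rightarrow> real \<Rightarrow> real" where
  "nxt P x = Min {y\<in>P. x < y}"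

definition grid :: "'n set \<Rightarrow> ('n \<Rightarrow> real set) \<Rightarrow> bool" where
  "grid J P \<longleftrightarrow> (\<forall>j\<in>J. finite (P j) \<and> P j \<subseteq> {0..1} \<and> 0 \<in> P j \<and> 1 \<in> P j)"

text \<open>Cells of the grid, indexed by their lower corners.\<close>
definition cells :: "'n set \<Rightarrow> ('n \<Rightarrow> real set) \<Rightarrow> ('n \<Rightarrow> real) set" where
  "cells J P = PiE J (\<lambda>j. P j - {1})"

definition vol :: "'n::finite set \<Rightarrow> (real^'n \<Rightarrow> real) \<Rightarrow> ('n \<Rightarrow> real) \<Rightarrow> ('n \<Rightarrow> real) \<Rightarrow> real" where
  "vol J g a b = (\<Sum>L\<in>Pow J. (-1) ^ card L *
      g (\<chi> i. if i \<in> L then a i else if i \<in> J then b i else 1))"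

definition vitali_var :: "'n::finite set \<Rightarrow> (real^'n \<Rightarrow> real) \<Rightarrow> ereal" where
  "vitali_var J g = (SUP P\<in>{P. grid J P}.
      ereal (\<Sum>a\<in>cells J P. \<bar>vol J g a (\<lambda>j. nxt (P j) (a j))\<bar>))"

definition hk_bv :: "'n::finite set \<Rightarrow> (real^'n \<Rightarrow> real) \<Rightarrow> bool" where
  "hk_bv S g \<longleftrightarrow> (\<forall>J. J \<subseteq> S \<and> J \<noteq> {} \<longrightarrow> vitali_var J g < \<infinity>)"

definition rs_tags :: "'n::finite set \<Rightarrow> ('n \<Rightarrow> real set) \<Rightarrow> (('n \<Rightarrow> real) \<Rightarrow> real^'n) \<Rightarrow> bool" where
  "rs_tags J P \<tau> \<longleftrightarrow> (\<forall>a\<in>cells J P. (\<forall>j\<in>J. a j \<le> \<tau> a $ j \<and> \<tau> a $ j \<le> nxt (P j) (a j))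
        \<and> (\<forall>i. i \<notin> J \<longrightarrow> \<tau> a $ i = 1))"

definition rs_sum :: "'n::finite set \<Rightarrow> (real^'n \<Rightarrow> real) \<Rightarrow> (real^'n \<Rightarrow> real) \<Rightarrow> ('n \<Rightarrow> real set)
    \<Rightarrow> (('n \<Rightarrow> real) \<Rightarrow> real^'n) \<Rightarrow> real" where
  "rs_sum J f g P \<tau> = (\<Sum>a\<in>cells J P. f (\<tau> a) * vol J g a (\<lambda>j. nxt (P j) (a j)))"

definition rs_has :: "'n::finite set \<Rightarrow> (real^'n \<Rightarrow> real) \<Rightarrow> (real^'n \<Rightarrow> real) \<Rightarrow> real \<Rightarrow> bool" where
  "rs_has J f g I \<longleftrightarrow> (\<forall>\<epsilon>>0. \<exists>\<delta>>0. \<forall>P \<tau>. grid J P \<and> (\<forall>j\<in>J. \<forall>x\<in>P j - {1}. nxt (P j) x - x < \<delta>)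
       \<and> rs_tags J P \<tau> \<longrightarrow> \<bar>rs_sum J f g P \<tau> - I\<bar> < \<epsilon>)"

definition rs_int :: "'n::finite set \<Rightarrow> (real^'n \<Rightarrow> real) \<Rightarrow> (real^'n \<Rightarrow> real) \<Rightarrow> real" where
  "rs_int J f g = (THE I. rs_has J f g I)"

text \<open>The second integral \<integral> psi C_K h_{K'}(du_{K'}) du_{I\K'} =
  \<integral> chi dh_{K'} is defined by multivariate integration by parts, transferring the integration
  onto chi:  \<integral> chi dh_{K'} = \<Sum>_{J \<subseteq> K'} (-1)^{|J|} \<integral>_{[0,1]^J} h(w_J:1) d chi(w_J:1).\<close>
definition Dpsi :: "'n::finite set \<Rightarrow> 'n set \<Rightarrow> (real^'n \<Rightarrow> real) \<Rightarrow> (real^'n \<Rightarrow> real)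
    \<Rightarrow> (real^'n \<Rightarrow> real) \<Rightarrow> real" where
  "Dpsi K K' \<psi> C h =
     (LINT x | restrict_space (cdf_measure C) (cbox 0 1). chi K K' \<psi> h x)
     + (\<Sum>J\<in>Pow K'. (-1) ^ card J * rs_int J h (chi K K' \<psi> C))"

definition hadamard_diff_tangent :: "((real^'n::finite \<Rightarrow> real) \<Rightarrow> real) \<Rightarrow> (real^'n \<Rightarrow> real) set
    \<Rightarrow> (real^'n \<Rightarrow> real) set \<Rightarrow> (real^'n \<Rightarrow> real) \<Rightarrow> ((real^'n \<Rightarrow> real) \<Rightarrow> real) \<Rightarrow> bool" where
  "hadamard_diff_tangent \<Phi> Dom T C D \<longleftrightarrow>
     (\<forall>f\<in>T. \<forall>g\<in>T. \<forall>a b. D (\<lambda>u. a * f u + b * g u) = a * D f + b * D g) \<and>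
     (\<exists>B. \<forall>f\<in>T. \<bar>D f\<bar> \<le> B * (SUP u\<in>cbox 0 1. \<bar>f u\<bar>)) \<and>
     (\<forall>t hs h. (\<forall>n. t n \<noteq> 0) \<longrightarrow> t \<longlonglongrightarrow> 0 \<longrightarrow> h \<in> T \<longrightarrow>
        uniform_limit (cbox 0 1) hs h sequentially \<longrightarrow>
        (\<forall>n. (\<lambda>u. C u + t n * hs n u) \<in> Dom) \<longrightarrow>
        (\<lambda>n. (\<Phi> (\<lambda>u. C u + t n * hs n u) - \<Phi> C) / t n) \<longlonglongrightarrow> D h)"

end

theory Submission
  imports Defs
begin


definition upd :: "real^'n \<Rightarrow> 'n \<Rightarrow> real \<Rightarrow> real^'n" where
  "upd x j c = (\<chi> i. if i = j then c else x$i)"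

lemma upd_nth[simp]: "upd x j c $ i = (if i = j then c else x$i)"
  by (simp add: upd_def)

lemma vol_insert:
  fixes g :: "real^'n::finite \<Rightarrow> real"
  assumes "j \<notin> J"
  shows "vol (insert j J) g a b = vol J (\<lambda>x. g (upd x j (b j))) a b - vol J (\<lambda>x. g (upd x j (a j))) a b"
proof -
  have fin: "finite J" by simp
  have inj: "inj_on (insert j) (Pow J)"
    using assms by (auto simp: inj_on_def)
  have disj: "Pow J \<inter> insert j ` Pow J = {}" using assms by auto
  have "vol (insert j J) g a b = (\<Sum>L\<in>Pow J. (-1) ^ card L *
      g (\<chi> i. if i \<in> L then a i else if i \<in> insert j J then b i else 1)) +
      (\<Sum>L\<in>insert j ` Pow J. (-1) ^ card L *
      g (\<chi> i. if i \<in> L then a i else if i \<in> insert j J then b i else 1))"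
    unfolding vol_def Pow_insert by (rule sum.union_disjoint) (use disj in auto)
  also have "(\<Sum>L\<in>Pow J. (-1) ^ card L *
      g (\<chi> i. if i \<in> L then a i else if i \<in> insert j J then b i else 1))
    = vol J (\<lambda>x. g (upd x j (b j))) a b"
    unfolding vol_def
  proof (rule sum.cong[OF refl])
    fix L assume L: "L \<in> Pow J"
    have "(\<chi> i. if i \<in> L then a i else if i \<in> insert j J then b i else 1)
       = upd (\<chi> i. if i \<in> L then a i else if i \<in> J then b i else 1) j (b j)"
      using L assms by (auto simp: vec_eq_iff)
    then show "(-1) ^ card L * g (\<chi> i. if i \<in> L then a i else if i \<in> insert j J then b i else 1)
      = (-1) ^ card L * g (upd (\<chi> i. if i \<in> L then a i else if i \<in> J then b i else 1) j (b j))"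
      by simp
  qed
  also have "(\<Sum>L\<in>insert j ` Pow J. (-1) ^ card L *
      g (\<chi> i. if i \<in> L then a i else if i \<in> insert j J then b i else 1))
    = - vol J (\<lambda>x. g (upd x j (a j))) a b"
    unfolding vol_def sum.reindex[OF inj] sum_negf[symmetric] o_def
  proof (rule sum.cong[OF refl])
    fix L assume L: "L \<in> Pow J"
    have fL: "finite L" using L finite_subset by auto
    have jL: "j \<notin> L" using L assms by auto
    have "(\<chi> i. if i \<in> insert j L then a i else if i \<in> insert j J then b i else 1)
       = upd (\<chi> i. if i \<in> L then a i else if i \<in> J then b i else 1) j (a j)"
      using L assms by (auto simp: vec_eq_iff)
    then show "(-1) ^ card (insert j L) * g (\<chi> i. if i \<in> insert j L then a i else if i \<in> insert j J then b i else 1)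
      = - ((-1) ^ card L * g (upd (\<chi> i. if i \<in> L then a i else if i \<in> J then b i else 1) j (a j)))"
      using fL jL by simp
  qed
  finally show ?thesis by simp
qed


lemma nxt_eq:
  assumes "finite R" "b \<in> R" "m < b" "\<And>y. y \<in> R \<Longrightarrow> m < y \<Longrightarrow> b \<le> y"
  shows "nxt R m = b"
  unfolding nxt_def using assms by (intro Min_eqI) auto

lemma telescope_nxt:
  fixes f :: "real \<Rightarrow> 'b::ab_group_add"
  assumes "finite R" "\<alpha> \<in> R" "\<beta> \<in> R" "\<alpha> \<le> \<beta>"
  shows "(\<Sum>y\<in>{y\<in>R. \<alpha> \<le> y \<and> y < \<beta>}. f (nxt R y) - f y) = f \<beta> - f \<alpha>"
  using assms(3,4)
proof (induction "card {y\<in>R. \<alpha> \<le> y \<and> y < \<beta>}" arbitrary: \<beta> rule: less_induct)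
  case less
  show ?case
  proof (cases "{y\<in>R. \<alpha> \<le> y \<and> y < \<beta>} = {}")
    case True
    then have "\<alpha> = \<beta>" using less.prems assms(2) by force
    then show ?thesis unfolding True by simp
  next
    case False
    define S where "S = {y\<in>R. \<alpha> \<le> y \<and> y < \<beta>}"
    have finS: "finite S" using assms(1) by (simp add: S_def)
    define m where "m = Max S"
    have mS: "m \<in> S" unfolding m_def by (rule Max_in[OF finS]) (use False in \<open>simp add: S_def\<close>)
    have mmax: "y \<le> m" if "y \<in> S" for y using finS that by (simp add: m_def)
    have nm: "nxt R m = \<beta>"
    proof (rule nxt_eq[OF assms(1) less.prems(1)])
      show "m < \<beta>" using mS by (simp add: S_def)
      fix y assume "y \<in> R" "m < y"
      then show "\<beta> \<le> y" using mmax[of y] mS by (force simp: S_def)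
    qed
    have S_split: "S = insert m {y\<in>R. \<alpha> \<le> y \<and> y < m}"
      using mS mmax by (force simp: S_def)
    have notin: "m \<notin> {y\<in>R. \<alpha> \<le> y \<and> y < m}" by simp
    have sub: "{y\<in>R. \<alpha> \<le> y \<and> y < m} \<subseteq> S" using mS by (auto simp: S_def)
    have lt: "card {y\<in>R. \<alpha> \<le> y \<and> y < m} < card {y\<in>R. \<alpha> \<le> y \<and> y < \<beta>}"
      using S_split notin finS by (metis S_def card_insert_disjoint finite_insert lessI finite_subset sub)
    have IH: "(\<Sum>y\<in>{y\<in>R. \<alpha> \<le> y \<and> y < m}. f (nxt R y) - f y) = f m - f \<alpha>"
      using less.hyps[OF lt] mS by (auto simp: S_def)
    have "(\<Sum>y\<in>S. f (nxt R y) - f y) = (f (nxt R m) - f m) + (\<Sum>y\<in>{y\<in>R. \<alpha> \<le> y \<and> y < m}. f (nxt R y) - f y)"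
      unfolding S_split using assms(1) notin by (subst sum.insert) auto
    also have "\<dots> = f \<beta> - f \<alpha>" using IH nm by simp
    finally show ?thesis by (simp add: S_def)
  qed
qed

lemma vol_cong:
  assumes "\<And>j. j \<in> J \<Longrightarrow> a j = a' j" "\<And>j. j \<in> J \<Longrightarrow> b j = b' j"
  shows "vol J g a b = vol J g a' b'"
  unfolding vol_def
  by (rule sum.cong[OF refl], rule arg_cong[where f="\<lambda>x. _ * g x"]) (use assms in \<open>auto simp: vec_eq_iff\<close>)

lemma vol_additive:
  fixes g :: "real^'n::finite \<Rightarrow> real"
  assumes fin: "\<And>j. j \<in> J \<Longrightarrow> finite (A j)"
    and tel: "\<And>j f. j \<in> J \<Longrightarrow> (\<Sum>y\<in>A j. f (n j y) - f y) = (f (\<beta> j) - f (\<alpha> j) :: real)"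
  shows "(\<Sum>a\<in>PiE J A. vol J g a (\<lambda>j. n j (a j))) = vol J g \<alpha> \<beta>"
proof -
  have "finite J" by simp
  then show ?thesis using fin tel
  proof (induction J arbitrary: g rule: finite_induct)
    case empty
    then show ?case by (simp add: vol_def)
  next
    case (insert j J)
    have IH: "\<And>g. (\<Sum>a\<in>PiE J A. vol J g a (\<lambda>j. n j (a j))) = vol J g \<alpha> \<beta>"
      using insert by auto
    have "(\<Sum>a\<in>PiE (insert j J) A. vol (insert j J) g a (\<lambda>j. n j (a j)))
       = (\<Sum>y\<in>A j. \<Sum>a\<in>PiE J A. vol (insert j J) g (a(j := y)) (\<lambda>i. n i ((a(j := y)) i)))"
      unfolding PiE_insert_eq
      by (subst sum.reindex[OF inj_combinator[OF insert.hyps(2)]]) (simp add: sum.cartesian_product o_def case_prod_unfold)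
    also have "\<dots> = (\<Sum>y\<in>A j. \<Sum>a\<in>PiE J A. vol J (\<lambda>x. g (upd x j (n j y))) a (\<lambda>i. n i (a i))
                                   - vol J (\<lambda>x. g (upd x j y)) a (\<lambda>i. n i (a i)))"
    proof (intro sum.cong refl)
      fix y a assume "a \<in> PiE J A"
      show "vol (insert j J) g (a(j := y)) (\<lambda>i. n i ((a(j := y)) i))
         = vol J (\<lambda>x. g (upd x j (n j y))) a (\<lambda>i. n i (a i)) - vol J (\<lambda>x. g (upd x j y)) a (\<lambda>i. n i (a i))"
        unfolding vol_insert[OF insert.hyps(2)] using insert.hyps(2)
        by (auto intro!: arg_cong2[where f="(-)"] vol_cong)
    qed
    also have "\<dots> = (\<Sum>y\<in>A j. vol J (\<lambda>x. g (upd x j (n j y))) \<alpha> \<beta> - vol J (\<lambda>x. g (upd x j y)) \<alpha> \<beta>)"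
      by (simp add: sum_subtractf IH)
    also have "\<dots> = vol J (\<lambda>x. g (upd x j (\<beta> j))) \<alpha> \<beta> - vol J (\<lambda>x. g (upd x j (\<alpha> j))) \<alpha> \<beta>"
      using insert.prems(2)[of j "\<lambda>c. vol J (\<lambda>x. g (upd x j c)) \<alpha> \<beta>"] by simp
    also have "\<dots> = vol (insert j J) g \<alpha> \<beta>"
      by (rule vol_insert[OF insert.hyps(2), symmetric])
    finally show ?case .
  qed
qed


lemma vol_upd_out:
  fixes g :: "real^'n::finite \<Rightarrow> real"
  assumes "s \<notin> J"
  shows "vol J (\<lambda>x. g (upd x s 1)) a (\<lambda>_. 1) = vol J g a (\<lambda>_. 1)"
  unfolding vol_def
proof (rule sum.cong[OF refl])
  fix L assume "L \<in> Pow J"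
  then have "upd (\<chi> i. if i \<in> L then a i else if i \<in> J then 1 else 1) s 1
      = (\<chi> i. if i \<in> L then a i else if i \<in> J then 1 else 1)" using assms by (auto simp: vec_eq_iff)
  then show "(-1) ^ card L * g (upd (\<chi> i. if i \<in> L then a i else if i \<in> J then 1 else 1) s 1) =
         (-1) ^ card L * g (\<chi> i. if i \<in> L then a i else if i \<in> J then 1 else 1)" by simp
qed

lemma vol_alt_sum:
  fixes g :: "real^'n::finite \<Rightarrow> real"
  shows "(\<Sum>J\<in>Pow S. (-1) ^ card J * vol J g b (\<lambda>_. 1)) = g (\<chi> i. if i \<in> S then b i else 1)"
proof -
  have "finite S" by simp
  then show ?thesis
  proof (induction S arbitrary: g rule: finite_induct)
    case empty
    then show ?case by (simp add: vol_def)
  next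
    case (insert s S)
    have inj: "inj_on (insert s) (Pow S)"
      using insert.hyps by (auto simp: inj_on_def)
    have disj: "Pow S \<inter> insert s ` Pow S = {}" using insert.hyps by auto
    have "(\<Sum>J\<in>Pow (insert s S). (-1) ^ card J * vol J g b (\<lambda>_. 1))
       = (\<Sum>J\<in>Pow S. (-1) ^ card J * vol J g b (\<lambda>_. 1)) +
         (\<Sum>J\<in>insert s ` Pow S. (-1) ^ card J * vol J g b (\<lambda>_. 1))"
      unfolding Pow_insert by (rule sum.union_disjoint) (use disj in auto)
    also have "(\<Sum>J\<in>insert s ` Pow S. (-1) ^ card J * vol J g b (\<lambda>_. 1))
       = (\<Sum>J\<in>Pow S. - ((-1) ^ card J * vol (insert s J) g b (\<lambda>_. 1)))"
      unfolding sum.reindex[OF inj] o_def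
    proof (rule sum.cong[OF refl])
      fix J assume "J \<in> Pow S"
      then have "finite J" "s \<notin> J" using insert.hyps finite_subset by auto
      then show "(-1) ^ card (insert s J) * vol (insert s J) g b (\<lambda>_. 1) =
          - ((-1) ^ card J * vol (insert s J) g b (\<lambda>_. 1))" by simp
    qed
    also have "(\<Sum>J\<in>Pow S. (-1) ^ card J * vol J g b (\<lambda>_. 1)) + \<dots>
       = (\<Sum>J\<in>Pow S. (-1) ^ card J * vol J (\<lambda>x. g (upd x s (b s))) b (\<lambda>_. 1))"
      unfolding sum.distrib[symmetric]
    proof (rule sum.cong[OF refl])
      fix J assume "J \<in> Pow S"
      then have sJ: "s \<notin> J" using insert.hyps by auto
      show "(-1) ^ card J * vol J g b (\<lambda>_. 1) + - ((-1) ^ card J * vol (insert s J) g b (\<lambda>_. 1)) =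
         (-1) ^ card J * vol J (\<lambda>x. g (upd x s (b s))) b (\<lambda>_. 1)"
        unfolding vol_insert[OF sJ] vol_upd_out[OF sJ] by (simp add: algebra_simps)
    qed
    also have "\<dots> = g (upd (\<chi> i. if i \<in> S then b i else 1) s (b s))"
      by (rule insert.IH)
    also have "upd (\<chi> i. if i \<in> S then b i else 1) s (b s) = (\<chi> i. if i \<in> insert s S then b i else 1)"
      by (auto simp: vec_eq_iff)
    finally show ?case .
  qed
qed


definition ceilg :: "real set \<Rightarrow> real \<Rightarrow> real" where
  "ceilg P x = Min {y\<in>P. x \<le> y}"

definition tau :: "'n set \<Rightarrow> ('n \<Rightarrow> real) \<Rightarrow> real^'n" where
  "tau J a = (\<chi> i. if i \<in> J then a i else 1)"

lemma ceilg_props: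
  assumes "finite P" "1 \<in> P" "x \<le> 1"
  shows "ceilg P x \<in> P" "x \<le> ceilg P x" "\<And>y. y \<in> P \<Longrightarrow> x \<le> y \<Longrightarrow> ceilg P x \<le> y"
proof -
  have ne: "{y\<in>P. x \<le> y} \<noteq> {}" using assms by auto
  have fin: "finite {y\<in>P. x \<le> y}" using assms by auto
  show "ceilg P x \<in> P" "x \<le> ceilg P x"
    using Min_in[OF fin ne] by (auto simp: ceilg_def)
  show "\<And>y. y \<in> P \<Longrightarrow> x \<le> y \<Longrightarrow> ceilg P x \<le> y"
    using fin by (auto simp: ceilg_def)
qed

lemma PiE_filter:
  "{a\<in>PiE J A. \<forall>j\<in>J. Q j (a j)} = PiE J (\<lambda>j. {y\<in>A j. Q j y})"
  by (auto simp: PiE_iff extensional_def)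

lemma box_sum:
  fixes g :: "real^'n::finite \<Rightarrow> real"
  assumes "grid J P" "\<And>j. j \<in> J \<Longrightarrow> 0 \<le> x$j \<and> x$j \<le> 1"
  shows "(\<Sum>a\<in>cells J P. vol J g a (\<lambda>j. nxt (P j) (a j)) * (if (\<forall>j\<in>J. x$j \<le> a j) then 1 else 0))
       = vol J g (\<lambda>j. ceilg (P j) (x$j)) (\<lambda>_. 1)"
proof -
  define b where "b = (\<lambda>j. ceilg (P j) (x$j))"
  have fin: "finite (cells J P)" using assms(1)
    by (auto simp: cells_def grid_def intro!: finite_PiE)
  have "(\<Sum>a\<in>cells J P. vol J g a (\<lambda>j. nxt (P j) (a j)) * (if (\<forall>j\<in>J. x$j \<le> a j) then 1 else 0))
      = (\<Sum>a\<in>{a\<in>cells J P. \<forall>j\<in>J. x$j \<le> a j}. vol J g a (\<lambda>j. nxt (P j) (a j)))"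
    by (simp add: sum.inter_filter[OF fin] if_distrib cong: if_cong)
  also have "{a\<in>cells J P. \<forall>j\<in>J. x$j \<le> a j} = PiE J (\<lambda>j. {y\<in>P j - {1}. x$j \<le> y})"
    unfolding cells_def by (rule PiE_filter)
  also have "\<dots> = PiE J (\<lambda>j. {y\<in>P j. b j \<le> y \<and> y < 1})"
  proof (rule PiE_cong)
    fix j assume j: "j \<in> J"
    have g: "finite (P j)" "P j \<subseteq> {0..1}" "1 \<in> P j" using assms(1) j by (auto simp: grid_def)
    have x1: "x$j \<le> 1" using assms(2) j by auto
    note cp = ceilg_props[OF g(1) g(3) x1]
    show "{y \<in> P j - {1}. x $ j \<le> y} = {y \<in> P j. b j \<le> y \<and> y < 1}"
      using cp g(2) unfolding b_def by force
  qed
  also have "(\<Sum>a\<in>PiE J (\<lambda>j. {y\<in>P j. b j \<le> y \<and> y < 1}). vol J g a (\<lambda>j. nxt (P j) (a j)))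
      = vol J g b (\<lambda>_. 1)"
  proof (rule vol_additive)
    fix j assume j: "j \<in> J"
    have g: "finite (P j)" "P j \<subseteq> {0..1}" "1 \<in> P j" using assms(1) j by (auto simp: grid_def)
    have x1: "x$j \<le> 1" using assms(2) j by auto
    note cp = ceilg_props[OF g(1) g(3) x1]
    show "finite {y\<in>P j. b j \<le> y \<and> y < 1}" using g by auto
    fix f :: "real \<Rightarrow> real"
    show "(\<Sum>y\<in>{y\<in>P j. b j \<le> y \<and> y < 1}. f (nxt (P j) y) - f y) = f 1 - f (b j)"
      by (rule telescope_nxt) (use cp g x1 in \<open>auto simp: b_def\<close>)
  qed
  finally show ?thesis by (simp add: b_def)
qed

lemma step_identity:
  fixes g :: "real^'n::finite \<Rightarrow> real"
  assumes "grid S P" "\<And>j. j \<in> S \<Longrightarrow> 0 \<le> x$j \<and> x$j \<le> 1"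
  shows "(\<Sum>J\<in>Pow S. (-1) ^ card J * (\<Sum>a\<in>cells J P. vol J g a (\<lambda>j. nxt (P j) (a j)) *
            (if (\<forall>j\<in>J. x$j \<le> a j) then 1 else 0)))
       = g (\<chi> i. if i \<in> S then ceilg (P i) (x$i) else 1)"
proof -
  have "(\<Sum>J\<in>Pow S. (-1) ^ card J * (\<Sum>a\<in>cells J P. vol J g a (\<lambda>j. nxt (P j) (a j)) *
            (if (\<forall>j\<in>J. x$j \<le> a j) then 1 else 0)))
      = (\<Sum>J\<in>Pow S. (-1) ^ card J * vol J g (\<lambda>j. ceilg (P j) (x$j)) (\<lambda>_. 1))"
  proof (rule sum.cong[OF refl])
    fix J assume "J \<in> Pow S"
    then have "grid J P" "\<And>j. j \<in> J \<Longrightarrow> 0 \<le> x$j \<and> x$j \<le> 1" using assms by (auto simp: grid_def)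
    from box_sum[OF this] show "(-1) ^ card J * (\<Sum>a\<in>cells J P. vol J g a (\<lambda>j. nxt (P j) (a j)) *
            (if (\<forall>j\<in>J. x$j \<le> a j) then 1 else 0)) = (-1) ^ card J * vol J g (\<lambda>j. ceilg (P j) (x$j)) (\<lambda>_. 1)"
      by simp
  qed
  also have "\<dots> = g (\<chi> i. if i \<in> S then ceilg (P i) (x$i) else 1)"
    by (rule vol_alt_sum)
  finally show ?thesis .
qed



lemma unif_cont_cube:
  fixes f :: "real^'n::finite \<Rightarrow> real"
  assumes "continuous_on (cbox 0 1) f" "e > 0"
  shows "\<exists>d>0. \<forall>x\<in>cbox 0 1. \<forall>y\<in>cbox 0 1. (\<forall>i. \<bar>x$i - y$i\<bar> \<le> d) \<longrightarrow> \<bar>f x - f y\<bar> < e"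
proof -
  have "uniformly_continuous_on (cbox 0 1) f"
    using assms(1) by (intro compact_uniformly_continuous) auto
  then obtain d where d: "d > 0" "\<And>x y. x \<in> cbox 0 1 \<Longrightarrow> y \<in> cbox 0 1 \<Longrightarrow> dist y x < d \<Longrightarrow> dist (f y) (f x) < e"
    unfolding uniformly_continuous_on_def using assms(2) by metis
  define d' where "d' = d / (2 * real CARD('n))"
  have cpos: "real CARD('n) > 0" by simp
  have d'pos: "d' > 0" using d(1) cpos by (simp add: d'_def)
  show ?thesis
  proof (intro exI[of _ d'] conjI d'pos ballI impI)
    fix x y :: "real^'n" assume xy: "x \<in> cbox 0 1" "y \<in> cbox 0 1" "\<forall>i. \<bar>x$i - y$i\<bar> \<le> d'"
    have "dist y x \<le> (\<Sum>i\<in>UNIV. \<bar>(y - x)$i\<bar>)" unfolding dist_norm by (rule norm_le_l1_cart)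
    also have "\<dots> \<le> (\<Sum>i\<in>(UNIV::'n set). d')"
      by (rule sum_mono) (use xy(3) in \<open>auto simp: abs_minus_commute\<close>)
    also have "\<dots> = d / 2" using cpos by (simp add: d'_def)
    also have "\<dots> < d" using d(1) by simp
    finally have "dist (f y) (f x) < e" using d(2)[OF xy(1,2)] by simp
    then show "\<bar>f x - f y\<bar> < e" by (simp add: dist_real_def abs_minus_commute)
  qed
qed

lemma nxt_props:
  assumes "finite P" "1 \<in> P" "x < 1"
  shows "nxt P x \<in> P" "x < nxt P x" "\<And>y. y \<in> P \<Longrightarrow> x < y \<Longrightarrow> nxt P x \<le> y"
proof -
  have ne: "{y\<in>P. x < y} \<noteq> {}" using assms by auto
  have fin: "finite {y\<in>P. x < y}" using assms by auto
  show "nxt P x \<in> P" "x < nxt P x"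
    using Min_in[OF fin ne] by (auto simp: nxt_def)
  show "\<And>y. y \<in> P \<Longrightarrow> x < y \<Longrightarrow> nxt P x \<le> y"
    using fin by (auto simp: nxt_def)
qed

definition parent :: "'n set \<Rightarrow> ('n \<Rightarrow> real set) \<Rightarrow> ('n \<Rightarrow> real) \<Rightarrow> ('n \<Rightarrow> real)" where
  "parent J P a = restrict (\<lambda>j. Max {y\<in>P j. y \<le> a j}) J"

lemma parent_coord:
  assumes "finite P" "0 \<in> P" "1 \<in> P" "P \<subseteq> {0..1}" "c \<in> P" "c < 1" "0 \<le> y" "y < 1"
  shows "Max {z\<in>P. z \<le> y} = c \<longleftrightarrow> c \<le> y \<and> y < nxt P c"
proof -
  have fin: "finite {z\<in>P. z \<le> y}" using assms by auto
  have ne: "{z\<in>P. z \<le> y} \<noteq> {}" using assms by auto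
  have M: "Max {z\<in>P. z \<le> y} \<in> P" "Max {z\<in>P. z \<le> y} \<le> y"
    using Min_in Max_in[OF fin ne] by auto
  have Mge: "\<And>z. z \<in> P \<Longrightarrow> z \<le> y \<Longrightarrow> z \<le> Max {z\<in>P. z \<le> y}" using fin by auto
  note np = nxt_props[OF assms(1) assms(3) assms(6)]
  show ?thesis
  proof
    assume eq: "Max {z\<in>P. z \<le> y} = c"
    have "c \<le> y" using M eq by simp
    moreover have "y < nxt P c"
    proof (rule ccontr)
      assume "\<not> y < nxt P c"
      then have "nxt P c \<le> c" using Mge[OF np(1)] eq by simp
      then show False using np(2) by simp
    qed
    ultimately show "c \<le> y \<and> y < nxt P c" by simp
  next
    assume c: "c \<le> y \<and> y < nxt P c"
    have "c \<le> Max {z\<in>P. z \<le> y}" using Mge[OF assms(5)] c by simp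
    moreover have "\<not> c < Max {z\<in>P. z \<le> y}"
    proof
      assume "c < Max {z\<in>P. z \<le> y}"
      then have "nxt P c \<le> Max {z\<in>P. z \<le> y}" using np(3)[OF M(1)] by simp
      then show False using M(2) c by simp
    qed
    ultimately show "Max {z\<in>P. z \<le> y} = c" by simp
  qed
qed

lemma parent_in_cells:
  assumes "grid J P" "a' \<in> cells J R" "grid J R"
  shows "parent J P a' \<in> cells J P"
  unfolding cells_def PiE_iff
proof (intro conjI ballI)
  show "parent J P a' \<in> extensional J" by (simp add: parent_def)
  fix j assume j: "j \<in> J"
  have g: "finite (P j)" "0 \<in> P j" "1 \<in> P j" "P j \<subseteq> {0..1}" using assms(1) j by (auto simp: grid_def)
  have a': "a' j \<in> R j" "a' j \<noteq> 1" "R j \<subseteq> {0..1}" using assms(2,3) j by (auto simp: cells_def grid_def PiE_iff)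
  then have a'r: "0 \<le> a' j" "a' j < 1" by auto
  have fin: "finite {z\<in>P j. z \<le> a' j}" using g by auto
  have ne: "{z\<in>P j. z \<le> a' j} \<noteq> {}" using g a'r by auto
  show "parent J P a' j \<in> P j - {1}"
    using Max_in[OF fin ne] a'r j by (auto simp: parent_def)
qed

lemma children:
  assumes P: "grid J P" and R: "grid J R" and sub: "\<And>j. j \<in> J \<Longrightarrow> P j \<subseteq> R j" and a: "a \<in> cells J P"
  shows "{a'\<in>cells J R. parent J P a' = a} = PiE J (\<lambda>j. {y\<in>R j. a j \<le> y \<and> y < nxt (P j) (a j)})"
proof -
  have "{a'\<in>cells J R. parent J P a' = a} = {a'\<in>cells J R. \<forall>j\<in>J. Max {z\<in>P j. z \<le> a' j} = a j}"
  proof (intro Collect_cong conj_cong refl iffI)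
    fix a' assume "a' \<in> cells J R" "parent J P a' = a"
    then show "\<forall>j\<in>J. Max {z\<in>P j. z \<le> a' j} = a j" by (auto simp: parent_def)
  next
    fix a' assume "a' \<in> cells J R" "\<forall>j\<in>J. Max {z\<in>P j. z \<le> a' j} = a j"
    then show "parent J P a' = a" using a
      by (auto simp: parent_def cells_def PiE_iff extensional_def fun_eq_iff)
  qed
  also have "\<dots> = PiE J (\<lambda>j. {y\<in>R j - {1}. Max {z\<in>P j. z \<le> y} = a j})"
    unfolding cells_def by (rule PiE_filter)
  also have "\<dots> = PiE J (\<lambda>j. {y\<in>R j. a j \<le> y \<and> y < nxt (P j) (a j)})"
  proof (rule PiE_cong)
    fix j assume j: "j \<in> J"
    have g: "finite (P j)" "0 \<in> P j" "1 \<in> P j" "P j \<subseteq> {0..1}" using P j by (auto simp: grid_def)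
    have gr: "finite (R j)" "0 \<in> R j" "1 \<in> R j" "R j \<subseteq> {0..1}" using R j by (auto simp: grid_def)
    have aj: "a j \<in> P j" "a j \<noteq> 1" using a j by (auto simp: cells_def PiE_iff)
    then have aj1: "a j < 1" "0 \<le> a j" using g(4) by force+
    note np = nxt_props[OF g(1) g(3) aj1(1)]
    have n1: "nxt (P j) (a j) \<le> 1" using np(1) g(4) by auto
    show "{y\<in>R j - {1}. Max {z\<in>P j. z \<le> y} = a j} = {y\<in>R j. a j \<le> y \<and> y < nxt (P j) (a j)}"
    proof (intro set_eqI iffI)
      fix y assume y: "y \<in> {y\<in>R j - {1}. Max {z\<in>P j. z \<le> y} = a j}"
      then have "0 \<le> y" "y < 1" using gr(4) by force+
      then show "y \<in> {y\<in>R j. a j \<le> y \<and> y < nxt (P j) (a j)}"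
        using y parent_coord[OF g aj(1) aj1(1)] by auto
    next
      fix y assume y: "y \<in> {y\<in>R j. a j \<le> y \<and> y < nxt (P j) (a j)}"
      then have "0 \<le> y" "y < 1" using aj1 n1 by auto
      then show "y \<in> {y\<in>R j - {1}. Max {z\<in>P j. z \<le> y} = a j}"
        using y parent_coord[OF g aj(1) aj1(1)] by auto
    qed
  qed
  finally show ?thesis .
qed

lemma refine_vol:
  fixes g :: "real^'n::finite \<Rightarrow> real"
  assumes P: "grid J P" and R: "grid J R" and sub: "\<And>j. j \<in> J \<Longrightarrow> P j \<subseteq> R j" and a: "a \<in> cells J P"
  shows "vol J g a (\<lambda>j. nxt (P j) (a j)) = (\<Sum>a'\<in>{a'\<in>cells J R. parent J P a' = a}. vol J g a' (\<lambda>j. nxt (R j) (a' j)))"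
proof -
  have eq: "{a'\<in>cells J R. parent J P a' = a} = PiE J (\<lambda>j. {y\<in>R j. a j \<le> y \<and> y < nxt (P j) (a j)})"
    by (rule children[OF assms])
  show ?thesis unfolding eq
proof (rule vol_additive[symmetric])
  fix j assume j: "j \<in> J"
  have g: "finite (P j)" "0 \<in> P j" "1 \<in> P j" "P j \<subseteq> {0..1}" using P j by (auto simp: grid_def)
  have gr: "finite (R j)" "0 \<in> R j" "1 \<in> R j" "R j \<subseteq> {0..1}" using R j by (auto simp: grid_def)
  have aj: "a j \<in> P j" "a j \<noteq> 1" using a j by (auto simp: cells_def PiE_iff)
  then have aj1: "a j < 1" "0 \<le> a j" using g(4) by force+
  note np = nxt_props[OF g(1) g(3) aj1(1)]
  show "finite {y\<in>R j. a j \<le> y \<and> y < nxt (P j) (a j)}" using gr by auto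
  fix f :: "real \<Rightarrow> real"
  show "(\<Sum>y\<in>{y\<in>R j. a j \<le> y \<and> y < nxt (P j) (a j)}. f (nxt (R j) y) - f y) = f (nxt (P j) (a j)) - f (a j)"
    by (rule telescope_nxt) (use gr aj np sub[OF j] in auto)
qed
qed


lemma finite_cells: "grid (J::'n::finite set) P \<Longrightarrow> finite (cells J P)"
  by (auto simp: cells_def grid_def intro!: finite_PiE)

lemma rs_sum_refine:
  fixes g :: "real^'n::finite \<Rightarrow> real"
  assumes P: "grid J P" and R: "grid J R" and sub: "\<And>j. j \<in> J \<Longrightarrow> P j \<subseteq> R j"
  shows "rs_sum J f g P \<tau> = (\<Sum>a'\<in>cells J R. f (\<tau> (parent J P a')) * vol J g a' (\<lambda>j. nxt (R j) (a' j)))"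
proof -
  have "rs_sum J f g P \<tau> = (\<Sum>a\<in>cells J P. f (\<tau> a) *
      (\<Sum>a'\<in>{a'\<in>cells J R. parent J P a' = a}. vol J g a' (\<lambda>j. nxt (R j) (a' j))))"
    unfolding rs_sum_def by (rule sum.cong[OF refl]) (simp add: refine_vol[OF P R sub])
  also have "\<dots> = (\<Sum>a\<in>cells J P. \<Sum>a'\<in>{a'\<in>cells J R. parent J P a' = a}.
       f (\<tau> (parent J P a')) * vol J g a' (\<lambda>j. nxt (R j) (a' j)))"
    by (simp add: sum_distrib_left)
  also have "\<dots> = (\<Sum>a'\<in>cells J R. f (\<tau> (parent J P a')) * vol J g a' (\<lambda>j. nxt (R j) (a' j)))"
    by (rule sum.group) (use finite_cells[OF P] finite_cells[OF R] parent_in_cells[OF P _ R] in auto)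
  finally show ?thesis .
qed

lemma rs_compare:
  fixes g f :: "real^'n::finite \<Rightarrow> real"
  assumes P: "grid J P" and R: "grid J R" and sub: "\<And>j. j \<in> J \<Longrightarrow> P j \<subseteq> R j"
    and tP: "rs_tags J P \<tau>" and tR: "rs_tags J R \<sigma>"
    and Vb: "(\<Sum>a'\<in>cells J R. \<bar>vol J g a' (\<lambda>j. nxt (R j) (a' j))\<bar>) \<le> V"
    and close: "\<And>x y. x \<in> cbox 0 1 \<Longrightarrow> y \<in> cbox 0 1 \<Longrightarrow> (\<forall>i. \<bar>x$i - y$i\<bar> \<le> \<delta>) \<Longrightarrow> \<bar>f x - f y\<bar> < \<epsilon>"
    and fine: "\<forall>j\<in>J. \<forall>x\<in>P j - {1}. nxt (P j) x - x < \<delta>"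
    and eps: "\<epsilon> \<ge> 0" and dpos: "\<delta> \<ge> 0"
  shows "\<bar>rs_sum J f g P \<tau> - rs_sum J f g R \<sigma>\<bar> \<le> \<epsilon> * V"
proof -
  have cl: "\<bar>f (\<tau> (parent J P a')) - f (\<sigma> a')\<bar> \<le> \<epsilon>" if a': "a' \<in> cells J R" for a'
  proof -
    define a where "a = parent J P a'"
    have a: "a \<in> cells J P" using parent_in_cells[OF P a' R] by (simp add: a_def)
    have ch: "a' \<in> PiE J (\<lambda>j. {y\<in>R j. a j \<le> y \<and> y < nxt (P j) (a j)})"
      using children[OF P R sub a] a' by (auto simp: a_def)
    have coord: "\<bar>\<tau> a $ i - \<sigma> a' $ i\<bar> \<le> \<delta> \<and> 0 \<le> \<tau> a $ i \<and> \<tau> a $ i \<le> 1 \<and> 0 \<le> \<sigma> a' $ i \<and> \<sigma> a' $ i \<le> 1" for i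
    proof (cases "i \<in> J")
      case True
      have g: "finite (P i)" "0 \<in> P i" "1 \<in> P i" "P i \<subseteq> {0..1}" using P True by (auto simp: grid_def)
      have gr: "finite (R i)" "0 \<in> R i" "1 \<in> R i" "R i \<subseteq> {0..1}" using R True by (auto simp: grid_def)
      have ai: "a i \<in> P i" "a i \<noteq> 1" using a True by (auto simp: cells_def PiE_iff)
      then have ai1: "a i < 1" "0 \<le> a i" using g(4) by force+
      note np = nxt_props[OF g(1) g(3) ai1(1)]
      have a'i: "a' i \<in> R i" "a i \<le> a' i" "a' i < nxt (P i) (a i)" using ch True by (auto simp: PiE_iff)
      have a'i1: "a' i < 1" using a'i(3) np(1) g(4) by force
      note npr = nxt_props[OF gr(1) gr(3) a'i1]
      have nr: "nxt (R i) (a' i) \<le> nxt (P i) (a i)" using npr(3)[of "nxt (P i) (a i)"] np(1) sub[OF True] a'i(3) by auto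
      have tt: "a i \<le> \<tau> a $ i" "\<tau> a $ i \<le> nxt (P i) (a i)" using tP a True by (auto simp: rs_tags_def)
      have ss: "a' i \<le> \<sigma> a' $ i" "\<sigma> a' $ i \<le> nxt (R i) (a' i)" using tR a' True by (auto simp: rs_tags_def)
      have fi: "nxt (P i) (a i) - a i < \<delta>" using fine True ai by auto
      have "nxt (P i) (a i) \<le> 1" using np(1) g(4) by auto
      then show ?thesis using tt ss nr fi a'i ai1 by auto
    next
      case False
      then show ?thesis using tP a tR a' dpos by (auto simp: rs_tags_def)
    qed
    have "\<tau> a \<in> cbox 0 1" "\<sigma> a' \<in> cbox 0 1" using coord by (auto simp: mem_box_cart)
    moreover have "\<forall>i. \<bar>\<tau> a $ i - \<sigma> a' $ i\<bar> \<le> \<delta>" using coord by blast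
    ultimately have "\<bar>f (\<tau> a) - f (\<sigma> a')\<bar> < \<epsilon>" by (rule close)
    then show ?thesis by (simp add: a_def)
  qed
  have "rs_sum J f g P \<tau> - rs_sum J f g R \<sigma> =
      (\<Sum>a'\<in>cells J R. (f (\<tau> (parent J P a')) - f (\<sigma> a')) * vol J g a' (\<lambda>j. nxt (R j) (a' j)))"
  proof -
    have e1: "rs_sum J f g P \<tau> = (\<Sum>a'\<in>cells J R. f (\<tau> (parent J P a')) * vol J g a' (\<lambda>j. nxt (R j) (a' j)))"
      by (rule rs_sum_refine[OF P R sub])
    have e2: "rs_sum J f g R \<sigma> = (\<Sum>a'\<in>cells J R. f (\<sigma> a') * vol J g a' (\<lambda>j. nxt (R j) (a' j)))"
      by (simp add: rs_sum_def)
    show ?thesis unfolding e1 e2 by (simp add: left_diff_distrib sum_subtractf)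
  qed
  also have "\<bar>\<dots>\<bar> \<le> (\<Sum>a'\<in>cells J R. \<bar>(f (\<tau> (parent J P a')) - f (\<sigma> a')) * vol J g a' (\<lambda>j. nxt (R j) (a' j))\<bar>)"
    by (rule sum_abs)
  also have "\<dots> \<le> (\<Sum>a'\<in>cells J R. \<epsilon> * \<bar>vol J g a' (\<lambda>j. nxt (R j) (a' j))\<bar>)"
    unfolding abs_mult by (rule sum_mono) (use cl in \<open>auto intro: mult_right_mono\<close>)
  also have "\<dots> \<le> \<epsilon> * V" unfolding sum_distrib_left[symmetric] using Vb eps by (rule mult_left_mono)
  finally show ?thesis .
qed



definition ug :: "nat \<Rightarrow> real set" where
  "ug m = (\<lambda>k. real k / real m) ` {..m}"

definition mfine :: "'n set \<Rightarrow> ('n \<Rightarrow> real set) \<Rightarrow> real \<Rightarrow> bool" where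
  "mfine J P \<delta> \<longleftrightarrow> (\<forall>j\<in>J. \<forall>x\<in>P j - {1}. nxt (P j) x - x < \<delta>)"

lemma ug_basic:
  assumes "m > 0"
  shows "finite (ug m)" "ug m \<subseteq> {0..1}" "0 \<in> ug m" "1 \<in> ug m"
proof -
  show "finite (ug m)" by (simp add: ug_def)
  show "ug m \<subseteq> {0..1}" using assms by (auto simp: ug_def divide_le_eq_1)
  show "0 \<in> ug m" by (force simp: ug_def)
  have "real m / real m = 1" using assms by simp
  then show "1 \<in> ug m" unfolding ug_def by (metis atMost_iff image_eqI order_refl)
qed

lemma grid_ug: "m > 0 \<Longrightarrow> grid J (\<lambda>_. ug m)"
  using ug_basic by (auto simp: grid_def)

lemma nxt_ug:
  assumes "m > 0" "x \<in> ug m - {1}"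
  shows "nxt (ug m) x = x + 1 / real m"
proof -
  obtain k where k: "k \<le> m" "x = real k / real m" using assms(2) by (auto simp: ug_def)
  have "k \<noteq> m" using k assms by auto
  then have km: "k < m" using k by simp
  show ?thesis
  proof (rule nxt_eq)
    show "finite (ug m)" by (simp add: ug_def)
    have xk: "x + 1 / real m = real (Suc k) / real m" using k assms(1) by (simp add: field_simps)
    then show "x + 1 / real m \<in> ug m" using km unfolding ug_def by (metis Suc_leI atMost_iff image_eqI)
    show "x < x + 1 / real m" using assms(1) by simp
    fix y assume y: "y \<in> ug m" "x < y"
    then obtain l where l: "l \<le> m" "y = real l / real m" by (auto simp: ug_def)
    have "real k < real l" using y(2) k(2) l(2) assms(1) by (simp add: divide_strict_right_mono_neg divide_less_cancel)
    then have "Suc k \<le> l" by simp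
    then have "real (Suc k) / real m \<le> real l / real m" using assms(1) by (simp add: divide_right_mono)
    then show "x + 1 / real m \<le> y" using xk l(2) by simp
  qed
qed

lemma mfine_ug: "m > 0 \<Longrightarrow> 1 / real m < \<delta> \<Longrightarrow> mfine J (\<lambda>_. ug m) \<delta>"
  by (auto simp: mfine_def nxt_ug)

lemma tags_tau:
  assumes "grid J P"
  shows "rs_tags J P (tau J)"
  unfolding rs_tags_def
proof (intro ballI conjI allI impI)
  fix a j assume a: "a \<in> cells J P" and j: "j \<in> J"
  have g: "finite (P j)" "1 \<in> P j" "P j \<subseteq> {0..1}" using assms j by (auto simp: grid_def)
  have "a j \<in> P j" "a j \<noteq> 1" using a j by (auto simp: cells_def PiE_iff)
  then have "a j < 1" using g by force
  from nxt_props(2)[OF g(1,2) this] show "a j \<le> tau J a $ j" "tau J a $ j \<le> nxt (P j) (a j)"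
    using j by (auto simp: tau_def)
next
  fix a i assume "i \<notin> J" then show "tau J a $ i = 1" by (simp add: tau_def)
qed

lemma grid_union: "grid J P \<Longrightarrow> grid J Q \<Longrightarrow> grid J (\<lambda>j. P j \<union> Q j)"
  by (auto simp: grid_def)

lemma rs_cauchy:
  fixes f g :: "real^'n::finite \<Rightarrow> real"
  assumes cont: "continuous_on (cbox 0 1) f"
    and Vb: "\<And>P. grid J P \<Longrightarrow> (\<Sum>a\<in>cells J P. \<bar>vol J g a (\<lambda>j. nxt (P j) (a j))\<bar>) \<le> V"
    and e: "\<epsilon> > 0"
  shows "\<exists>\<delta>>0. \<forall>P \<tau> Q \<sigma>. grid J P \<and> mfine J P \<delta> \<and> rs_tags J P \<tau> \<and> grid J Q \<and> mfine J Q \<delta> \<and> rs_tags J Q \<sigma>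
     \<longrightarrow> \<bar>rs_sum J f g P \<tau> - rs_sum J f g Q \<sigma>\<bar> \<le> 2 * \<epsilon> * V"
proof -
  obtain d where d: "d > 0" "\<And>x y. x\<in>cbox 0 1 \<Longrightarrow> y\<in>cbox 0 1 \<Longrightarrow> (\<forall>i. \<bar>x$i - y$i\<bar> \<le> d) \<Longrightarrow> \<bar>f x - f y\<bar> < \<epsilon>"
    using unif_cont_cube[OF cont e] by blast
  show ?thesis
  proof (intro exI[of _ d] conjI d(1) allI impI)
    fix P \<tau> Q \<sigma> assume H: "grid J P \<and> mfine J P d \<and> rs_tags J P \<tau> \<and> grid J Q \<and> mfine J Q d \<and> rs_tags J Q \<sigma>"
    define R where "R = (\<lambda>j. P j \<union> Q j)"
    have R: "grid J R" unfolding R_def by (rule grid_union) (use H in auto)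
    have t: "rs_tags J R (tau J)" by (rule tags_tau[OF R])
    have "\<bar>rs_sum J f g P \<tau> - rs_sum J f g R (tau J)\<bar> \<le> \<epsilon> * V"
      by (rule rs_compare[OF _ R _ _ t Vb[OF R] d(2)]) (use H e d(1) in \<open>auto simp: R_def mfine_def\<close>)
    moreover have "\<bar>rs_sum J f g Q \<sigma> - rs_sum J f g R (tau J)\<bar> \<le> \<epsilon> * V"
      by (rule rs_compare[OF _ R _ _ t Vb[OF R] d(2)]) (use H e d(1) in \<open>auto simp: R_def mfine_def\<close>)
    ultimately show "\<bar>rs_sum J f g P \<tau> - rs_sum J f g Q \<sigma>\<bar> \<le> 2 * \<epsilon> * V" by linarith
  qed
qed


lemma rs_has_alt: "rs_has J f g I \<longleftrightarrow> (\<forall>\<epsilon>>0. \<exists>\<delta>>0. \<forall>P \<tau>. grid J P \<and> mfine J P \<delta> \<and> rs_tags J P \<tau> \<longrightarrow> \<bar>rs_sum J f g P \<tau> - I\<bar> < \<epsilon>)"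
  unfolding rs_has_def mfine_def by simp

lemma abs_two: "\<bar>s - a\<bar> < \<bar>a - b\<bar> / 2 \<Longrightarrow> \<bar>s - b\<bar> < \<bar>a - b\<bar> / 2 \<Longrightarrow> False" for s a b :: real
  by (auto simp: abs_if split: if_split_asm)

lemma rs_unique:
  assumes "rs_has J f g I1" "rs_has J f g I2"
  shows "I1 = I2"
proof (rule ccontr)
  assume ne: "I1 \<noteq> I2"
  define e where "e = \<bar>I1 - I2\<bar> / 2"
  have e: "e > 0" using ne by (simp add: e_def)
  obtain d1 where d1: "d1 > 0" "\<And>P \<tau>. grid J P \<and> mfine J P d1 \<and> rs_tags J P \<tau> \<Longrightarrow> \<bar>rs_sum J f g P \<tau> - I1\<bar> < e"
    using assms(1) e unfolding rs_has_alt by metis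
  obtain d2 where d2: "d2 > 0" "\<And>P \<tau>. grid J P \<and> mfine J P d2 \<and> rs_tags J P \<tau> \<Longrightarrow> \<bar>rs_sum J f g P \<tau> - I2\<bar> < e"
    using assms(2) e unfolding rs_has_alt by metis
  obtain m :: nat where m: "1 / real (Suc m) < min d1 d2"
    using d1(1) d2(1) by (metis min_less_iff_conj nat_approx_posE)
  have G: "grid J (\<lambda>_. ug (Suc m))" by (rule grid_ug) simp
  have T: "rs_tags J (\<lambda>_. ug (Suc m)) (tau J)" by (rule tags_tau[OF G])
  have "\<bar>rs_sum J f g (\<lambda>_. ug (Suc m)) (tau J) - I1\<bar> < e"
    using d1(2) G T mfine_ug[of "Suc m" d1] m by auto
  moreover have "\<bar>rs_sum J f g (\<lambda>_. ug (Suc m)) (tau J) - I2\<bar> < e"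
    using d2(2) G T mfine_ug[of "Suc m" d2] m by auto
  ultimately show False unfolding e_def by (rule abs_two)
qed

lemma rs_int_eq: "rs_has J f g I \<Longrightarrow> rs_int J f g = I"
  unfolding rs_int_def using rs_unique by blast

lemma rs_exists:
  fixes f g :: "real^'n::finite \<Rightarrow> real"
  assumes cont: "continuous_on (cbox 0 1) f"
    and Vb: "\<And>P. grid J P \<Longrightarrow> (\<Sum>a\<in>cells J P. \<bar>vol J g a (\<lambda>j. nxt (P j) (a j))\<bar>) \<le> V"
  shows "rs_has J f g (rs_int J f g)"
proof -
  have V0: "V \<ge> 0" using Vb[OF grid_ug[of 1]] by (meson order_trans sum_nonneg abs_ge_zero zero_less_one)
  define s where "s m = rs_sum J f g (\<lambda>_. ug (Suc m)) (tau J)" for m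
  have G: "grid J (\<lambda>_. ug (Suc m))" for m by (rule grid_ug) simp
  have T: "rs_tags J (\<lambda>_. ug (Suc m)) (tau J)" for m by (rule tags_tau[OF G])
  have key: "\<exists>\<delta>>0. \<forall>P \<tau> Q \<sigma>. grid J P \<and> mfine J P \<delta> \<and> rs_tags J P \<tau> \<and> grid J Q \<and> mfine J Q \<delta> \<and> rs_tags J Q \<sigma>
     \<longrightarrow> \<bar>rs_sum J f g P \<tau> - rs_sum J f g Q \<sigma>\<bar> < e" if e: "e > 0" for e
  proof -
    define \<epsilon> where "\<epsilon> = e / (2 * V + 2)"
    have ep: "\<epsilon> > 0" using e V0 by (simp add: \<epsilon>_def)
    have lt: "2 * \<epsilon> * V < e"
    proof -
      have "2 * \<epsilon> * V = e * (2 * V) / (2 * V + 2)" by (simp add: \<epsilon>_def)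
      also have "\<dots> < e" using e V0 by (simp add: divide_less_eq)
      finally show ?thesis .
    qed
    obtain \<delta> where "\<delta> > 0" "\<forall>P \<tau> Q \<sigma>. grid J P \<and> mfine J P \<delta> \<and> rs_tags J P \<tau> \<and> grid J Q \<and> mfine J Q \<delta> \<and> rs_tags J Q \<sigma>
     \<longrightarrow> \<bar>rs_sum J f g P \<tau> - rs_sum J f g Q \<sigma>\<bar> \<le> 2 * \<epsilon> * V"
      using rs_cauchy[OF cont Vb ep] by blast
    then show ?thesis using lt by (meson le_less_trans)
  qed
  have fineN: "\<exists>N. \<forall>m\<ge>N. mfine J (\<lambda>_. ug (Suc m)) \<delta>" if dpos: "\<delta> > 0" for \<delta>
  proof -
    obtain N :: nat where N: "1 / real (Suc N) < \<delta>" using nat_approx_posE[OF dpos] by blast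
    have "mfine J (\<lambda>_. ug (Suc m)) \<delta>" if "m \<ge> N" for m
    proof (rule mfine_ug)
      have "1 / real (Suc m) \<le> 1 / real (Suc N)" using that by (simp add: frac_le)
      then show "1 / real (Suc m) < \<delta>" using N by simp
    qed simp
    then show ?thesis by blast
  qed
  have "Cauchy s"
  proof (rule CauchyI)
    fix e :: real assume "e > 0"
    then obtain \<delta> where d: "\<delta> > 0" "\<forall>P \<tau> Q \<sigma>. grid J P \<and> mfine J P \<delta> \<and> rs_tags J P \<tau> \<and> grid J Q \<and> mfine J Q \<delta> \<and> rs_tags J Q \<sigma>
     \<longrightarrow> \<bar>rs_sum J f g P \<tau> - rs_sum J f g Q \<sigma>\<bar> < e" using key by blast
    obtain N where N: "\<forall>m\<ge>N. mfine J (\<lambda>_. ug (Suc m)) \<delta>" using fineN[OF d(1)] by blast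
    show "\<exists>M. \<forall>m\<ge>M. \<forall>n\<ge>M. norm (s m - s n) < e"
    proof (intro exI[of _ N] allI impI)
      fix m n assume "m \<ge> N" "n \<ge> N"
      then show "norm (s m - s n) < e"
        using d(2)[rule_format, of "\<lambda>_. ug (Suc m)" "tau J" "\<lambda>_. ug (Suc n)" "tau J"] N G T by (simp add: s_def)
    qed
  qed
  then obtain I where I: "s \<longlonglongrightarrow> I" using Cauchy_convergent_iff convergent_def by blast
  have "rs_has J f g I"
    unfolding rs_has_alt
  proof (intro allI impI)
    fix e :: real assume e: "e > 0"
    then have e2: "e / 2 > 0" by simp
    obtain \<delta> where d: "\<delta> > 0" "\<forall>P \<tau> Q \<sigma>. grid J P \<and> mfine J P \<delta> \<and> rs_tags J P \<tau> \<and> grid J Q \<and> mfine J Q \<delta> \<and> rs_tags J Q \<sigma>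
     \<longrightarrow> \<bar>rs_sum J f g P \<tau> - rs_sum J f g Q \<sigma>\<bar> < e / 2" using key[OF e2] by blast
    obtain N1 where N1: "\<forall>m\<ge>N1. mfine J (\<lambda>_. ug (Suc m)) \<delta>" using fineN[OF d(1)] by blast
    obtain N2 where N2: "\<forall>m\<ge>N2. \<bar>s m - I\<bar> < e / 2"
      using I e2 unfolding LIMSEQ_def dist_real_def by blast
    define m where "m = max N1 N2"
    show "\<exists>\<delta>>0. \<forall>P \<tau>. grid J P \<and> mfine J P \<delta> \<and> rs_tags J P \<tau> \<longrightarrow> \<bar>rs_sum J f g P \<tau> - I\<bar> < e"
    proof (intro exI[of _ \<delta>] conjI d(1) allI impI)
      fix P \<tau> assume H: "grid J P \<and> mfine J P \<delta> \<and> rs_tags J P \<tau>"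
      have "\<bar>rs_sum J f g P \<tau> - s m\<bar> < e / 2"
        using d(2) H G T N1 by (auto simp: s_def m_def)
      moreover have "\<bar>s m - I\<bar> < e / 2" using N2 by (simp add: m_def)
      ultimately show "\<bar>rs_sum J f g P \<tau> - I\<bar> < e" by linarith
    qed
  qed
  then show ?thesis using rs_int_eq by metis
qed


lemma tag_in_cube:
  assumes "grid J P" "rs_tags J P \<tau>" "a \<in> cells J P"
  shows "\<tau> a \<in> cbox 0 (1::real^'n::finite)"
  unfolding mem_box_cart
proof
  fix i
  show "(0::real^'n)$i \<le> \<tau> a $ i \<and> \<tau> a $ i \<le> (1::real^'n)$i"
  proof (cases "i \<in> J")
    case True
    have g: "finite (P i)" "1 \<in> P i" "P i \<subseteq> {0..1}" using assms(1) True by (auto simp: grid_def)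
    have ai: "a i \<in> P i" "a i \<noteq> 1" using assms(3) True by (auto simp: cells_def PiE_iff)
    then have "a i < 1" "0 \<le> a i" using g by force+
    note np = nxt_props[OF g(1,2) this(1)]
    have "nxt (P i) (a i) \<le> 1" using np(1) g(3) by auto
    then show ?thesis using assms(2,3) True \<open>0 \<le> a i\<close> by (force simp: rs_tags_def)
  next
    case False
    then show ?thesis using assms(2,3) by (auto simp: rs_tags_def)
  qed
qed

lemma rs_sum_lin: "rs_sum J (\<lambda>u. a * f1 u + b * f2 u) g P \<tau> = a * rs_sum J f1 g P \<tau> + b * rs_sum J f2 g P \<tau>"
  unfolding rs_sum_def by (simp add: sum.distrib sum_distrib_left algebra_simps)

lemma rs_sum_bound:
  fixes f g :: "real^'n::finite \<Rightarrow> real"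
  assumes "grid J P" "rs_tags J P \<tau>" "\<And>x. x \<in> cbox 0 1 \<Longrightarrow> \<bar>f x\<bar> \<le> B"
    and Vb: "(\<Sum>a\<in>cells J P. \<bar>vol J g a (\<lambda>j. nxt (P j) (a j))\<bar>) \<le> V"
  shows "\<bar>rs_sum J f g P \<tau>\<bar> \<le> B * V"
proof -
  have "(0::real^'n) \<in> cbox 0 1" by (simp add: mem_box_cart)
  then have B0: "B \<ge> 0" using assms(3)[of 0] by (meson abs_ge_zero order_trans)
  have "\<bar>rs_sum J f g P \<tau>\<bar> \<le> (\<Sum>a\<in>cells J P. \<bar>f (\<tau> a) * vol J g a (\<lambda>j. nxt (P j) (a j))\<bar>)"
    unfolding rs_sum_def by (rule sum_abs)
  also have "\<dots> \<le> (\<Sum>a\<in>cells J P. B * \<bar>vol J g a (\<lambda>j. nxt (P j) (a j))\<bar>)"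
    unfolding abs_mult by (rule sum_mono) (use assms(3) tag_in_cube[OF assms(1,2)] in \<open>auto intro: mult_right_mono\<close>)
  also have "\<dots> \<le> B * V" unfolding sum_distrib_left[symmetric] using Vb B0 by (rule mult_left_mono)
  finally show ?thesis .
qed

lemma rs_has_lin:
  assumes "rs_has J f1 g I1" "rs_has J f2 g I2"
  shows "rs_has J (\<lambda>u. a * f1 u + b * f2 u) g (a * I1 + b * I2)"
  unfolding rs_has_alt
proof (intro allI impI)
  fix e :: real assume e: "e > 0"
  define e' where "e' = e / (2 * (\<bar>a\<bar> + \<bar>b\<bar> + 1))"
  have e': "e' > 0" using e by (simp add: e'_def add_pos_nonneg)
  obtain d1 where d1: "d1 > 0" "\<And>P \<tau>. grid J P \<and> mfine J P d1 \<and> rs_tags J P \<tau> \<Longrightarrow> \<bar>rs_sum J f1 g P \<tau> - I1\<bar> < e'"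
    using assms(1) e' unfolding rs_has_alt by metis
  obtain d2 where d2: "d2 > 0" "\<And>P \<tau>. grid J P \<and> mfine J P d2 \<and> rs_tags J P \<tau> \<Longrightarrow> \<bar>rs_sum J f2 g P \<tau> - I2\<bar> < e'"
    using assms(2) e' unfolding rs_has_alt by metis
  show "\<exists>\<delta>>0. \<forall>P \<tau>. grid J P \<and> mfine J P \<delta> \<and> rs_tags J P \<tau> \<longrightarrow>
      \<bar>rs_sum J (\<lambda>u. a * f1 u + b * f2 u) g P \<tau> - (a * I1 + b * I2)\<bar> < e"
  proof (intro exI[of _ "min d1 d2"] conjI allI impI)
    show "min d1 d2 > 0" using d1 d2 by simp
    fix P \<tau> assume H: "grid J P \<and> mfine J P (min d1 d2) \<and> rs_tags J P \<tau>"
    have "mfine J P d1" "mfine J P d2" using H by (auto simp: mfine_def)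
    then have h1: "\<bar>rs_sum J f1 g P \<tau> - I1\<bar> < e'" and h2: "\<bar>rs_sum J f2 g P \<tau> - I2\<bar> < e'"
      using d1(2) d2(2) H by auto
    have "\<bar>rs_sum J (\<lambda>u. a * f1 u + b * f2 u) g P \<tau> - (a * I1 + b * I2)\<bar>
        = \<bar>a * (rs_sum J f1 g P \<tau> - I1) + b * (rs_sum J f2 g P \<tau> - I2)\<bar>"
      by (simp add: rs_sum_lin algebra_simps)
    also have "\<dots> \<le> \<bar>a\<bar> * \<bar>rs_sum J f1 g P \<tau> - I1\<bar> + \<bar>b\<bar> * \<bar>rs_sum J f2 g P \<tau> - I2\<bar>"
      by (metis abs_mult abs_triangle_ineq)
    also have "\<dots> \<le> \<bar>a\<bar> * e' + \<bar>b\<bar> * e'"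
      using h1 h2 by (intro add_mono mult_left_mono) auto
    also have "\<dots> < e"
    proof -
      have "(\<bar>a\<bar> + \<bar>b\<bar>) * e' = e * (\<bar>a\<bar> + \<bar>b\<bar>) / (2 * (\<bar>a\<bar> + \<bar>b\<bar> + 1))" by (simp add: e'_def)
      also have "\<dots> < e" using e by (simp add: divide_less_eq add_pos_nonneg)
      finally show ?thesis by (simp add: algebra_simps)
    qed
    finally show "\<bar>rs_sum J (\<lambda>u. a * f1 u + b * f2 u) g P \<tau> - (a * I1 + b * I2)\<bar> < e" .
  qed
qed

lemma rs_has_bound:
  fixes f g :: "real^'n::finite \<Rightarrow> real"
  assumes I: "rs_has J f g I" and fb: "\<And>x. x \<in> cbox 0 1 \<Longrightarrow> \<bar>f x\<bar> \<le> B"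
    and Vb: "\<And>P. grid J P \<Longrightarrow> (\<Sum>a\<in>cells J P. \<bar>vol J g a (\<lambda>j. nxt (P j) (a j))\<bar>) \<le> V"
  shows "\<bar>I\<bar> \<le> B * V"
proof (rule field_le_epsilon)
  fix e :: real assume e: "e > 0"
  obtain d where d: "d > 0" "\<And>P \<tau>. grid J P \<and> mfine J P d \<and> rs_tags J P \<tau> \<Longrightarrow> \<bar>rs_sum J f g P \<tau> - I\<bar> < e"
    using I e unfolding rs_has_alt by metis
  obtain m :: nat where m: "1 / real (Suc m) < d" using nat_approx_posE[OF d(1)] by blast
  have G: "grid J (\<lambda>_. ug (Suc m))" by (rule grid_ug) simp
  have T: "rs_tags J (\<lambda>_. ug (Suc m)) (tau J)" by (rule tags_tau[OF G])
  have "\<bar>rs_sum J f g (\<lambda>_. ug (Suc m)) (tau J) - I\<bar> < e"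
    using d(2) G T mfine_ug[of "Suc m" d] m by auto
  moreover have "\<bar>rs_sum J f g (\<lambda>_. ug (Suc m)) (tau J)\<bar> \<le> B * V"
    by (rule rs_sum_bound[OF G T fb Vb[OF G]])
  ultimately show "\<bar>I\<bar> \<le> B * V + e" by (auto simp: abs_if split: if_split_asm)
qed



abbreviation cube :: "(real^'n::finite) set" where "cube \<equiv> cbox 0 1"

lemma cdf_basic:
  assumes "cdf_of F \<mu>"
  shows "prob_space \<mu>" "space \<mu> = UNIV" "cube \<in> sets \<mu>" "measure \<mu> cube = 1" "sets \<mu> = sets borel"
    "\<And>A. A \<in> sets borel \<Longrightarrow> A \<in> sets \<mu>" "\<And>A. emeasure \<mu> A < top"
proof -
  show "prob_space \<mu>" "sets \<mu> = sets borel" using assms by (auto simp: cdf_of_def)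
  then show "space \<mu> = UNIV" by (metis sets_eq_imp_space_eq space_borel)
  show "cube \<in> sets \<mu>" using \<open>sets \<mu> = sets borel\<close> by simp
  show "measure \<mu> cube = 1" using assms by (simp add: cdf_of_def measure_def)
  show "\<And>A. A \<in> sets borel \<Longrightarrow> A \<in> sets \<mu>" using \<open>sets \<mu> = sets borel\<close> by simp
  interpret prob_space \<mu> by fact
  show "\<And>A. emeasure \<mu> A < top" using emeasure_finite by (simp add: less_top[symmetric])
qed

lemma borel_to_mu:
  fixes f :: "real^'n::finite \<Rightarrow> real"
  assumes "cdf_of F \<mu>" "f \<in> borel_measurable borel"
  shows "f \<in> borel_measurable \<mu>"
proof -
  have "\<mu> \<rightarrow>\<^sub>M (borel::real measure) = borel \<rightarrow>\<^sub>M borel"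
    by (rule measurable_cong_sets[OF cdf_basic(5)[OF assms(1)] refl])
  then show ?thesis using assms(2) by simp
qed

lemma integrable_bounded_cube:
  fixes f :: "real^'n::finite \<Rightarrow> real"
  assumes cdf: "cdf_of F \<mu>" and m: "(\<lambda>x. indicator cube x * f x) \<in> borel_measurable borel"
    and b: "\<And>x. x \<in> cube \<Longrightarrow> \<bar>f x\<bar> \<le> B"
  shows "integrable \<mu> (\<lambda>x. indicator cube x * f x)"
proof -
  interpret prob_space \<mu> by (rule cdf_basic(1)[OF cdf])
  show ?thesis
  proof (rule integrableI_bounded_set[where A=cube and B=B])
    show "cube \<in> sets \<mu>" by (rule cdf_basic(3)[OF cdf])
    show "(\<lambda>x. indicator cube x * f x) \<in> borel_measurable \<mu>" by (rule borel_to_mu[OF cdf m])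
    show "emeasure \<mu> cube < \<infinity>" using emeasure_finite by (simp add: less_top[symmetric])
    show "AE x in \<mu>. x \<in> cube \<longrightarrow> norm (indicator cube x * f x) \<le> B" using b by auto
    show "AE x in \<mu>. x \<notin> cube \<longrightarrow> indicator cube x * f x = 0" by auto
  qed
qed

lemma integrable_cont_cube:
  fixes f :: "real^'n::finite \<Rightarrow> real"
  assumes cdf: "cdf_of F \<mu>" and c: "continuous_on cube f"
  shows "integrable \<mu> (\<lambda>x. indicator cube x * f x)"
proof -
  obtain B where B: "\<And>x. x \<in> cube \<Longrightarrow> norm (f x) \<le> B"
    using compact_imp_bounded[OF compact_continuous_image[OF c compact_cbox]] 
    by (auto simp: bounded_iff)
  have m: "(\<lambda>x. indicator cube x * f x) \<in> borel_measurable borel"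
    using borel_measurable_continuous_on_indicator[OF _ c] by simp
  show ?thesis by (rule integrable_bounded_cube[OF cdf m]) (use B in auto)
qed

lemma tau_in_cube:
  fixes J :: "'n::finite set"
  assumes "grid J P" "a \<in> cells J P"
  shows "tau J a \<in> cube"
  unfolding mem_box_cart
proof
  fix i
  show "(0::real^'n)$i \<le> tau J a $ i \<and> tau J a $ i \<le> (1::real^'n)$i"
  proof (cases "i \<in> J")
    case True
    then have "a i \<in> P i" "P i \<subseteq> {0..1}" using assms by (auto simp: grid_def cells_def PiE_iff)
    then show ?thesis using True by (auto simp: tau_def)
  qed (simp add: tau_def)
qed

lemma int_approx:
  fixes f g :: "real^'n::finite \<Rightarrow> real"
  assumes cdf: "cdf_of F \<mu>" and P: "grid S P"
    and fi: "integrable \<mu> (\<lambda>x. indicator cube x * f x)"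
    and close: "\<And>x. x \<in> cube \<Longrightarrow> \<bar>f x - g (\<chi> i. if i \<in> S then ceilg (P i) (x$i) else 1)\<bar> \<le> \<epsilon>"
  shows "\<bar>(LINT x | restrict_space \<mu> cube. f x) -
     (\<Sum>J\<in>Pow S. (-1) ^ card J * (\<Sum>a\<in>cells J P. vol J g a (\<lambda>j. nxt (P j) (a j)) * F (tau J a)))\<bar> \<le> \<epsilon>"
proof -
  note sp = cdf_basic(2)[OF cdf]
  have e0: "\<epsilon> \<ge> 0"
  proof -
    have "(0::real^'n) \<in> cube" by (simp add: mem_box_cart)
    from close[OF this] show ?thesis by simp
  qed
  define st where "st x = (\<Sum>J\<in>Pow S. (-1) ^ card J * (\<Sum>a\<in>cells J P. vol J g a (\<lambda>j. nxt (P j) (a j)) *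
      indicator (cbox 0 (tau J a)) x))" for x :: "real^'n"
  have PJ: "grid J P" if "J \<in> Pow S" for J using P that by (auto simp: grid_def)
  have int_st: "integrable \<mu> st" unfolding st_def
    by (auto intro!: Bochner_Integration.integrable_sum integrable_mult_right integrable_real_indicator simp: cdf_basic(6,7)[OF cdf])
  have I_st: "integral\<^sup>L \<mu> st = (\<Sum>J\<in>Pow S. (-1) ^ card J * (\<Sum>a\<in>cells J P. vol J g a (\<lambda>j. nxt (P j) (a j)) * F (tau J a)))"
    unfolding st_def
  proof (subst Bochner_Integration.integral_sum, goal_cases)
    case 1 show ?case
      by (auto intro!: Bochner_Integration.integrable_sum integrable_mult_right integrable_real_indicator simp: cdf_basic(6,7)[OF cdf])
  next
    case 2
    show ?case
    proof (rule sum.cong[OF refl])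
      fix J assume J: "J \<in> Pow S"
      have "integral\<^sup>L \<mu> (\<lambda>x. (-1) ^ card J * (\<Sum>a\<in>cells J P. vol J g a (\<lambda>j. nxt (P j) (a j)) * indicator (cbox 0 (tau J a)) x))
        = (-1) ^ card J * (\<Sum>a\<in>cells J P. integral\<^sup>L \<mu> (\<lambda>x. vol J g a (\<lambda>j. nxt (P j) (a j)) * indicator (cbox 0 (tau J a)) x))"
        by (subst integral_mult_right_zero, subst Bochner_Integration.integral_sum)
           (auto intro!: integrable_mult_right integrable_real_indicator simp: cdf_basic(6,7)[OF cdf])
      also have "\<dots> = (-1) ^ card J * (\<Sum>a\<in>cells J P. vol J g a (\<lambda>j. nxt (P j) (a j)) * F (tau J a))"
      proof (intro arg_cong[where f="\<lambda>x. _ * x"] sum.cong refl)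
        fix a assume a: "a \<in> cells J P"
        have "F (tau J a) = measure \<mu> (cbox 0 (tau J a))"
          using cdf tau_in_cube[OF PJ[OF J] a] by (auto simp: cdf_of_def)
        then show "integral\<^sup>L \<mu> (\<lambda>x. vol J g a (\<lambda>j. nxt (P j) (a j)) * indicator (cbox 0 (tau J a)) x)
           = vol J g a (\<lambda>j. nxt (P j) (a j)) * F (tau J a)" using sp by simp
      qed
      finally show "integral\<^sup>L \<mu> (\<lambda>x. (-1) ^ card J * (\<Sum>a\<in>cells J P. vol J g a (\<lambda>j. nxt (P j) (a j)) * indicator (cbox 0 (tau J a)) x))
        = (-1) ^ card J * (\<Sum>a\<in>cells J P. vol J g a (\<lambda>j. nxt (P j) (a j)) * F (tau J a))" .
    qed
  qed
  have st_in: "st x = g (\<chi> i. if i \<in> S then ceilg (P i) (x$i) else 1)" if x: "x \<in> cube" for x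
  proof -
    have x01: "\<And>i. 0 \<le> x$i \<and> x$i \<le> 1" using x by (simp add: mem_box_cart)
    have "st x = (\<Sum>J\<in>Pow S. (-1) ^ card J * (\<Sum>a\<in>cells J P. vol J g a (\<lambda>j. nxt (P j) (a j)) *
            (if (\<forall>j\<in>J. x$j \<le> a j) then 1 else 0)))"
      unfolding st_def
    proof (intro sum.cong refl arg_cong[where f="\<lambda>x. _ * x"] arg_cong[where f="\<lambda>x. _ * x"])
      fix J a assume "J \<in> Pow S" "a \<in> cells J P"
      show "indicator (cbox 0 (tau J a)) x = (if (\<forall>j\<in>J. x$j \<le> a j) then 1 else (0::real))"
        using x01 by (auto simp: indicator_def mem_box_cart tau_def)
    qed
    also have "\<dots> = g (\<chi> i. if i \<in> S then ceilg (P i) (x$i) else 1)"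
      by (rule step_identity[OF P]) (use x01 in auto)
    finally show ?thesis .
  qed
  have st_out: "st x = 0" if x: "x \<notin> cube" for x
  proof -
    have "indicator (cbox 0 (tau J a)) x = (0::real)" if "J \<in> Pow S" "a \<in> cells J P" for J a
    proof -
      have "cbox 0 (tau J a) \<subseteq> cube" using tau_in_cube[OF PJ[OF that(1)] that(2)]
        by (auto simp: mem_box_cart) (meson order_trans)
      then show ?thesis using x by (auto simp: indicator_def)
    qed
    then show ?thesis unfolding st_def by simp
  qed
  have "(LINT x | restrict_space \<mu> cube. f x) = integral\<^sup>L \<mu> (\<lambda>x. indicator cube x * f x)"
    by (subst integral_restrict_space) (auto simp: cdf_basic(3)[OF cdf] sp)
  moreover have "\<bar>integral\<^sup>L \<mu> (\<lambda>x. indicator cube x * f x) - integral\<^sup>L \<mu> st\<bar> \<le> \<epsilon>"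
  proof -
    have "\<bar>integral\<^sup>L \<mu> (\<lambda>x. indicator cube x * f x) - integral\<^sup>L \<mu> st\<bar>
        = \<bar>integral\<^sup>L \<mu> (\<lambda>x. indicator cube x * f x - st x)\<bar>"
      using fi int_st by simp
    also have "\<dots> \<le> integral\<^sup>L \<mu> (\<lambda>x. \<epsilon> * indicator cube x)"
    proof (rule integral_abs_bound_integral)
      show "integrable \<mu> (\<lambda>x. indicator cube x * f x - st x)" using fi int_st by simp
      show "integrable \<mu> (\<lambda>x. \<epsilon> * indicator cube x)"
        by (auto intro!: integrable_mult_right integrable_real_indicator simp: cdf_basic(3,7)[OF cdf])
      fix x show "\<bar>indicator cube x * f x - st x\<bar> \<le> \<epsilon> * indicator cube x"
        using close[of x] st_in[of x] st_out[of x] e0 by (cases "x \<in> cube") auto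
    qed
    also have "\<dots> = \<epsilon>" using cdf_basic(4)[OF cdf] sp by simp
    finally show ?thesis .
  qed
  ultimately show ?thesis using I_st by simp
qed



lemma lcube_space: "space (lebesgue_on (cube::(real^'n::finite) set)) = cube"
  by (simp add: space_restrict_space)

lemma lcube_measure: "measure (lebesgue_on (cube::(real^'n::finite) set)) cube = 1"
proof -
  have "measure (lebesgue_on (cube::(real^'n) set)) cube = measure lebesgue (cube::(real^'n) set)"
    by (subst measure_restrict_space) auto
  also have "\<dots> = measure lborel (cube::(real^'n) set)" by (simp add: measure_completion)
  also have "\<dots> = 1" unfolding measure_lborel_cbox_eq
    by (simp add: inner_diff_left Basis_vec_def cart_eq_inner_axis prod.UNION_disjoint axis_eq_axis)
       (auto simp: inner_axis intro!: prod.neutral)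
  finally show ?thesis .
qed

lemma lcube_bound:
  fixes f :: "real^'n::finite \<Rightarrow> real"
  assumes "integrable (lebesgue_on cube) f" "\<And>w. w \<in> cube \<Longrightarrow> \<bar>f w\<bar> \<le> c"
  shows "\<bar>LINT w | lebesgue_on cube. f w\<bar> \<le> c"
proof -
  have "\<bar>LINT w | lebesgue_on cube. f w\<bar> \<le> (LINT w | lebesgue_on (cube::(real^'n) set). c)"
    by (rule integral_abs_bound_integral) (use assms continuous_imp_integrable[of 0 1 "\<lambda>x::real^'n. c"] in \<open>auto simp: lcube_space\<close>)
  also have "\<dots> = c" by (simp add: lcube_space lcube_measure)
  finally show ?thesis .
qed


definition mp :: "'n set \<Rightarrow> real^'n \<Rightarrow> real^'n" where
  "mp K u = (\<chi> i. if i \<in> K then u$i else 1)"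

lemma marg_mp: "marg K G u = G (mp K u)"
  by (simp add: marg_def mp_def)

lemma mix_in_cube: "x \<in> cube \<Longrightarrow> w \<in> cube \<Longrightarrow> mix K' x w \<in> (cube::(real^'n::finite) set)"
  by (simp add: mem_box_cart mix_def)

lemma mp_in_cube: "u \<in> cube \<Longrightarrow> mp K u \<in> (cube::(real^'n::finite) set)"
  by (simp add: mem_box_cart mp_def)

lemma mix_cont:
  assumes "continuous_on S f" "continuous_on S g"
  shows "continuous_on S (\<lambda>p. mix K' (f p) (g p) :: real^'n::finite)"
  unfolding mix_def
proof (intro continuous_on_vec_lambda)
  fix i show "continuous_on S (\<lambda>p. if i \<in> K' then f p $ i else g p $ i)"
    by (cases "i \<in> K'") (auto intro!: continuous_on_component assms)
qed

lemma mp_cont: "continuous_on S (mp K :: real^'n::finite \<Rightarrow> real^'n)"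
  unfolding mp_def
proof (intro continuous_on_vec_lambda)
  fix i show "continuous_on S (\<lambda>p::real^'n. if i \<in> K then p $ i else 1)"
    by (cases "i \<in> K") (auto intro!: continuous_on_component continuous_on_id)
qed

lemma cont_mix_w:
  fixes F :: "real^'n::finite \<Rightarrow> real"
  assumes "continuous_on cube F" "x \<in> cube"
  shows "continuous_on cube (\<lambda>w. F (mix K' x w))"
  by (rule continuous_on_compose2[OF assms(1) mix_cont]) (use assms(2) mix_in_cube in \<open>auto intro: continuous_on_const continuous_on_id\<close>)

lemma chi_cont:
  fixes F :: "real^'n::finite \<Rightarrow> real"
  assumes F: "continuous_on cube F"
  shows "continuous_on cube (\<lambda>x. LINT w | lebesgue_on cube. F (mix K' x w))"
  unfolding continuous_on_iff
proof (intro ballI allI impI)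
  fix x :: "real^'n" and e :: real assume x: "x \<in> cube" and e: "e > 0"
  have "uniformly_continuous_on cube F" using F by (intro compact_uniformly_continuous) auto
  then obtain d where d: "d > 0" "\<And>u v. u \<in> cube \<Longrightarrow> v \<in> cube \<Longrightarrow> dist v u < d \<Longrightarrow> dist (F v) (F u) < e / 2"
    unfolding uniformly_continuous_on_def using e by (metis half_gt_zero)
  show "\<exists>d>0. \<forall>y\<in>cube. dist y x < d \<longrightarrow> dist (LINT w | lebesgue_on cube. F (mix K' y w)) (LINT w | lebesgue_on cube. F (mix K' x w)) < e"
  proof (intro exI[of _ d] conjI d(1) ballI impI)
    fix y :: "real^'n" assume y: "y \<in> cube" and dy: "dist y x < d"
    have iy: "integrable (lebesgue_on cube) (\<lambda>w. F (mix K' y w))"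
      by (rule continuous_imp_integrable[OF cont_mix_w[OF F y]])
    have ix: "integrable (lebesgue_on cube) (\<lambda>w. F (mix K' x w))"
      by (rule continuous_imp_integrable[OF cont_mix_w[OF F x]])
    have "\<bar>(LINT w | lebesgue_on cube. F (mix K' y w)) - (LINT w | lebesgue_on cube. F (mix K' x w))\<bar>
        = \<bar>LINT w | lebesgue_on cube. F (mix K' y w) - F (mix K' x w)\<bar>"
      using iy ix by simp
    also have "\<dots> \<le> e / 2"
    proof (rule lcube_bound)
      show "integrable (lebesgue_on cube) (\<lambda>w. F (mix K' y w) - F (mix K' x w))" using iy ix by simp
      fix w :: "real^'n" assume w: "w \<in> cube"
      have "norm (mix K' y w - mix K' x w) \<le> norm (y - x)"
        by (rule norm_le_componentwise_cart) (auto simp: mix_def)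
      then have "dist (mix K' y w) (mix K' x w) < d" using dy by (simp add: dist_norm)
      from d(2)[OF mix_in_cube[OF x w] mix_in_cube[OF y w] this]
      show "\<bar>F (mix K' y w) - F (mix K' x w)\<bar> \<le> e / 2" by (simp add: dist_real_def)
    qed
    also have "\<dots> < e" using e by simp
    finally show "dist (LINT w | lebesgue_on cube. F (mix K' y w)) (LINT w | lebesgue_on cube. F (mix K' x w)) < e"
      by (simp add: dist_real_def)
  qed
qed


lemma cdf_some: "G \<in> cdfs \<Longrightarrow> cdf_of G (cdf_measure G)"
  unfolding cdfs_def cdf_measure_def by (auto intro: someI_ex)

lemma copula_lip:
  fixes C :: "real^'n::finite \<Rightarrow> real"
  assumes cop: "copula C" and u: "u \<in> cube" and v: "v \<in> cube"
  shows "C u \<le> C v + (\<Sum>i\<in>UNIV. \<bar>u$i - v$i\<bar>)"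
proof -
  define \<mu> where "\<mu> = cdf_measure C"
  have cdf: "cdf_of C \<mu>" using cop cdf_some by (auto simp: copula_def \<mu>_def)
  interpret prob_space \<mu> by (rule cdf_basic(1)[OF cdf])
  have sets: "\<And>A. A \<in> sets borel \<Longrightarrow> A \<in> sets \<mu>" by (rule cdf_basic(6)[OF cdf])
  define e :: "'n \<Rightarrow> real \<Rightarrow> real^'n" where "e i c = (\<chi> j. if j = i then c else (1::real))" for i c
  define S where "S i = cbox 0 (e i (u$i)) - cbox 0 (e i (v$i))" for i
  have Cm: "C w = measure \<mu> (cbox 0 w)" if "w \<in> cube" for w using cdf that by (auto simp: cdf_of_def)
  have u01: "\<And>i. 0 \<le> u$i \<and> u$i \<le> 1" and v01: "\<And>i. 0 \<le> v$i \<and> v$i \<le> 1"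
    using u v by (auto simp: mem_box_cart)
  have ecube: "e i c \<in> cube" if "0 \<le> c" "c \<le> 1" for i c using that by (auto simp: mem_box_cart e_def)
  have marg: "C (e i c) = c" if "0 \<le> c" "c \<le> 1" for i c
    using cop that by (auto simp: copula_def e_def)
  have emono: "cbox 0 (e i c) \<subseteq> cbox 0 (e i c')" if cc: "c \<le> c'" for i c c'
  proof
    fix x assume x: "x \<in> cbox 0 (e i c)"
    show "x \<in> cbox 0 (e i c')" unfolding mem_box_cart
    proof
      fix j
      have "0 \<le> x$j \<and> x$j \<le> e i c $ j" using x by (simp add: mem_box_cart)
      then show "(0::real^'n)$j \<le> x$j \<and> x$j \<le> e i c' $ j" using cc by (auto simp: e_def)
    qed
  qed
  have sub: "cbox 0 u \<subseteq> cbox 0 v \<union> (\<Union>i. S i)"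
  proof
    fix x assume x: "x \<in> cbox 0 u"
    show "x \<in> cbox 0 v \<union> (\<Union>i. S i)"
    proof (cases "x \<in> cbox 0 v")
      case False
      have "\<exists>i. v$i < x$i"
      proof (rule ccontr)
        assume "\<not> (\<exists>i. v$i < x$i)"
        then have "x \<in> cbox 0 v" using x by (auto simp: mem_box_cart not_less)
        then show False using False by simp
      qed
      then obtain i where i: "v$i < x$i" by blast
      have "x \<in> S i" using x i u01 by (auto simp: S_def mem_box_cart e_def intro: order_trans)
      then show ?thesis by auto
    qed simp
  qed
  have Sle: "measure \<mu> (S i) \<le> \<bar>u$i - v$i\<bar>" for i
  proof (cases "u$i \<le> v$i")
    case True
    have "cbox 0 (e i (u$i)) \<subseteq> cbox 0 (e i (v$i))" by (rule emono[OF True])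
    then have "S i = {}" by (auto simp: S_def)
    then show ?thesis by simp
  next
    case False
    have "measure \<mu> (S i) = measure \<mu> (cbox 0 (e i (u$i))) - measure \<mu> (cbox 0 (e i (v$i)))"
      unfolding S_def
      by (rule finite_measure_Diff) (use False emono in \<open>auto intro!: sets\<close>)
    also have "\<dots> = u$i - v$i"
      using Cm[OF ecube] marg u01 v01 by simp
    finally show ?thesis by simp
  qed
  have "C u = measure \<mu> (cbox 0 u)" by (rule Cm[OF u])
  also have "\<dots> \<le> measure \<mu> (cbox 0 v \<union> (\<Union>i. S i))"
    by (rule finite_measure_mono[OF sub]) (auto intro!: sets simp: S_def)
  also have "\<dots> \<le> measure \<mu> (cbox 0 v) + measure \<mu> (\<Union>i. S i)"
    by (rule measure_Un_le) (auto intro!: sets simp: S_def)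
  also have "measure \<mu> (\<Union>i. S i) \<le> (\<Sum>i\<in>UNIV. measure \<mu> (S i))"
    by (rule finite_measure_subadditive_finite) (auto intro!: sets simp: S_def)
  also have "\<dots> \<le> (\<Sum>i\<in>UNIV. \<bar>u$i - v$i\<bar>)" by (rule sum_mono[OF Sle])
  finally show ?thesis using Cm[OF v] by simp
qed

lemma copula_cont:
  fixes C :: "real^'n::finite \<Rightarrow> real"
  assumes cop: "copula C"
  shows "continuous_on cube C"
  unfolding continuous_on_iff
proof (intro ballI allI impI)
  fix x :: "real^'n" and e :: real assume x: "x \<in> cube" and e: "e > 0"
  define d where "d = e / (real CARD('n) + 1)"
  have d: "d > 0" using e by (simp add: d_def add_pos_nonneg)
  show "\<exists>d>0. \<forall>y\<in>cube. dist y x < d \<longrightarrow> dist (C y) (C x) < e"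
  proof (intro exI[of _ d] conjI d ballI impI)
    fix y :: "real^'n" assume y: "y \<in> cube" and dy: "dist y x < d"
    have s: "(\<Sum>i\<in>UNIV. \<bar>y$i - x$i\<bar>) \<le> real CARD('n) * dist y x"
    proof -
      have "(\<Sum>i\<in>UNIV. \<bar>y$i - x$i\<bar>) \<le> (\<Sum>i\<in>(UNIV::'n set). dist y x)"
        by (rule sum_mono) (metis component_le_norm_cart dist_norm real_norm_def vector_minus_component)
      then show ?thesis by simp
    qed
    have "real CARD('n) * dist y x \<le> real CARD('n) * d" using dy by (intro mult_left_mono) auto
    also have "\<dots> < e" using e by (simp add: d_def field_simps)
    finally have lt: "(\<Sum>i\<in>UNIV. \<bar>y$i - x$i\<bar>) < e" using s by simp
    have "C y \<le> C x + (\<Sum>i\<in>UNIV. \<bar>y$i - x$i\<bar>)" by (rule copula_lip[OF cop y x])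
    moreover have "C x \<le> C y + (\<Sum>i\<in>UNIV. \<bar>x$i - y$i\<bar>)" by (rule copula_lip[OF cop x y])
    moreover have "(\<Sum>i\<in>UNIV. \<bar>x$i - y$i\<bar>) = (\<Sum>i\<in>UNIV. \<bar>y$i - x$i\<bar>)" by (simp add: abs_minus_commute)
    ultimately show "dist (C y) (C x) < e" using lt by (simp add: dist_real_def abs_if)
  qed
qed


lemma cdf_fun_meas:
  fixes \<mu> :: "(real^'n::finite) measure"
  assumes cdf: "cdf_of F \<mu>"
  shows "(\<lambda>u. measure \<mu> (cbox 0 u)) \<in> borel_measurable borel"
proof -
  interpret prob_space \<mu> by (rule cdf_basic(1)[OF cdf])
  define Q where "Q = {p :: (real^'n) \<times> (real^'n). \<forall>i. 0 \<le> snd p $ i \<and> snd p $ i \<le> fst p $ i}"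
  have "closed Q" unfolding Q_def
    by (intro closed_Collect_all closed_Collect_conj closed_Collect_le continuous_intros)
  then have "Q \<in> sets (borel :: ((real^'n) \<times> (real^'n)) measure)" by simp
  moreover have "sets (borel \<Otimes>\<^sub>M \<mu>) = sets (borel :: ((real^'n) \<times> (real^'n)) measure)"
    by (simp only: sets_pair_measure_cong[OF refl cdf_basic(5)[OF cdf]] borel_prod)
  ultimately have Q: "Q \<in> sets (borel \<Otimes>\<^sub>M \<mu>)" by simp
  have "(\<lambda>u. emeasure \<mu> (Pair u -` Q)) \<in> borel_measurable borel"
    by (rule measurable_emeasure_Pair[OF Q])
  moreover have "Pair u -` Q = cbox 0 u" for u by (auto simp: Q_def mem_box_cart)
  ultimately have "(\<lambda>u. emeasure \<mu> (cbox 0 u)) \<in> borel_measurable borel" by simp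
  then have "(\<lambda>u. enn2real (emeasure \<mu> (cbox 0 u))) \<in> borel_measurable borel" by measurable
  then show ?thesis by (simp add: measure_def)
qed


lemma borel_lcube:
  fixes f :: "real^'n::finite \<Rightarrow> real"
  assumes "f \<in> borel_measurable borel"
  shows "f \<in> borel_measurable (lebesgue_on cube)"
proof -
  have "f \<in> borel_measurable lborel" using assms measurable_cong_sets[OF sets_lborel refl] by simp
  then show ?thesis by (intro measurable_restrict_space1 measurable_completion)
qed

lemma int_lcube_bounded:
  fixes f :: "real^'n::finite \<Rightarrow> real"
  assumes "f \<in> borel_measurable (lebesgue_on cube)" "\<And>w. w \<in> cube \<Longrightarrow> \<bar>f w\<bar> \<le> B"
  shows "integrable (lebesgue_on cube) f"
proof -
  interpret finite_measure "lebesgue_on (cube::(real^'n) set)"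
    by (rule finite_measure_lebesgue_on) simp
  show ?thesis by (rule integrable_const_bound[where B=B]) (use assms in \<open>auto simp: lcube_space\<close>)
qed

definition Gt :: "(real^'n::finite) measure \<Rightarrow> real^'n \<Rightarrow> real" where
  "Gt \<mu> u = measure \<mu> (cbox 0 u)"

definition kk :: "'n::finite set \<Rightarrow> 'n set \<Rightarrow> (real^'n \<Rightarrow> real) \<Rightarrow> (real^'n) measure \<Rightarrow> real^'n \<Rightarrow> real^'n \<Rightarrow> real" where
  "kk K K' \<psi> \<mu> x w = indicator cube (mix K' x w) * \<psi> (mix K' x w) * Gt \<mu> (mp K (mix K' x w))"

lemma kk_meas:
  fixes \<mu> :: "(real^'n::finite) measure"
  assumes cdf: "cdf_of F \<mu>" and psi: "continuous_on cube \<psi>"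
  shows "(\<lambda>p. kk K K' \<psi> \<mu> (fst p) (snd p)) \<in> borel_measurable borel"
proof -
  have p1: "(\<lambda>u. indicator cube u * \<psi> u) \<in> borel_measurable borel"
    using borel_measurable_continuous_on_indicator[OF _ psi] by simp
  have p2: "Gt \<mu> \<in> borel_measurable borel" unfolding Gt_def by (rule cdf_fun_meas[OF cdf])
  have m1: "(\<lambda>p::(real^'n)\<times>(real^'n). mix K' (fst p) (snd p)) \<in> borel_measurable borel"
    by (intro borel_measurable_continuous_onI mix_cont continuous_intros)
  have m2: "(\<lambda>p::(real^'n)\<times>(real^'n). mp K (mix K' (fst p) (snd p))) \<in> borel_measurable borel"
    by (intro borel_measurable_continuous_onI continuous_on_compose2[OF mp_cont mix_cont] continuous_intros) auto
  have a: "(\<lambda>p::(real^'n)\<times>(real^'n). indicator cube (mix K' (fst p) (snd p)) * \<psi> (mix K' (fst p) (snd p))) \<in> borel_measurable borel"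
    using measurable_compose[OF m1 p1] by (simp add: o_def)
  have b: "(\<lambda>p::(real^'n)\<times>(real^'n). Gt \<mu> (mp K (mix K' (fst p) (snd p)))) \<in> borel_measurable borel"
    using measurable_compose[OF m2 p2] by (simp add: o_def)
  show ?thesis unfolding kk_def using borel_measurable_times[OF a b] by simp
qed

lemma kk_meas_w:
  fixes \<mu> :: "(real^'n::finite) measure"
  assumes cdf: "cdf_of F \<mu>" and psi: "continuous_on cube \<psi>"
  shows "kk K K' \<psi> \<mu> x \<in> borel_measurable borel"
proof -
  have "(\<lambda>w::real^'n. (x, w)) \<in> borel_measurable borel"
    by (intro borel_measurable_continuous_onI continuous_intros)
  from measurable_compose[OF this kk_meas[OF cdf psi]] show ?thesis by (simp add: o_def)
qed

lemma Gt_bound: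
  fixes \<mu> :: "(real^'n::finite) measure"
  assumes cdf: "cdf_of F \<mu>"
  shows "\<bar>Gt \<mu> u\<bar> \<le> 1"
proof -
  interpret prob_space \<mu> by (rule cdf_basic(1)[OF cdf])
  show ?thesis unfolding Gt_def by simp
qed

lemma psi_bound:
  fixes \<psi> :: "real^'n::finite \<Rightarrow> real"
  assumes "continuous_on cube \<psi>"
  obtains B where "B \<ge> 0" "\<And>u. u \<in> cube \<Longrightarrow> \<bar>\<psi> u\<bar> \<le> B"
proof -
  obtain B where B: "\<And>x. x \<in> cube \<Longrightarrow> norm (\<psi> x) \<le> B"
    using compact_imp_bounded[OF compact_continuous_image[OF assms compact_cbox]]
    by (auto simp: bounded_iff)
  have "(0::real^'n) \<in> cube" by (simp add: mem_box_cart)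
  then have "B \<ge> 0" using B[of 0] by (meson norm_ge_zero order_trans)
  then show ?thesis using B that by auto
qed

lemma kk_eq:
  fixes \<mu> :: "(real^'n::finite) measure"
  assumes cdf: "cdf_of G \<mu>" and x: "x \<in> cube" and w: "w \<in> cube"
  shows "kk K K' \<psi> \<mu> x w = \<psi> (mix K' x w) * marg K G (mix K' x w)"
proof -
  have m: "mix K' x w \<in> cube" by (rule mix_in_cube[OF x w])
  then have "mp K (mix K' x w) \<in> cube" by (rule mp_in_cube)
  then have "G (mp K (mix K' x w)) = Gt \<mu> (mp K (mix K' x w))" using cdf by (auto simp: cdf_of_def Gt_def)
  then show ?thesis using m by (simp add: kk_def marg_mp)
qed

lemma chi_int_w:
  fixes \<mu> :: "(real^'n::finite) measure"
  assumes cdf: "cdf_of G \<mu>" and psi: "continuous_on cube \<psi>" and x: "x \<in> cube"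
  shows "integrable (lebesgue_on cube) (\<lambda>w. \<psi> (mix K' x w) * marg K G (mix K' x w))"
proof -
  obtain B where B: "B \<ge> 0" "\<And>u. u \<in> cube \<Longrightarrow> \<bar>\<psi> u\<bar> \<le> B" using psi_bound[OF psi] by blast
  have "integrable (lebesgue_on cube) (kk K K' \<psi> \<mu> x)"
  proof (rule int_lcube_bounded[where B=B])
    show "kk K K' \<psi> \<mu> x \<in> borel_measurable (lebesgue_on cube)"
      by (rule borel_lcube[OF kk_meas_w[OF cdf psi]])
    fix w :: "real^'n" assume w: "w \<in> cube"
    have "\<bar>kk K K' \<psi> \<mu> x w\<bar> = \<bar>\<psi> (mix K' x w)\<bar> * \<bar>Gt \<mu> (mp K (mix K' x w))\<bar>"
      using mix_in_cube[OF x w] by (simp add: kk_def abs_mult)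
    also have "\<dots> \<le> B * 1"
      by (intro mult_mono B(2) mix_in_cube x w Gt_bound[OF cdf]) (auto simp: B(1))
    finally show "\<bar>kk K K' \<psi> \<mu> x w\<bar> \<le> B" by simp
  qed
  moreover have "integrable (lebesgue_on cube) (\<lambda>w. \<psi> (mix K' x w) * marg K G (mix K' x w)) = integrable (lebesgue_on cube) (kk K K' \<psi> \<mu> x)"
    by (rule Bochner_Integration.integrable_cong) (auto simp: lcube_space kk_eq[OF cdf x])
  ultimately show ?thesis by simp
qed

lemma chi_meas:
  fixes \<mu> :: "(real^'n::finite) measure"
  assumes cdf: "cdf_of G \<mu>" and psi: "continuous_on cube \<psi>"
  shows "(\<lambda>x. indicator cube x * chi K K' \<psi> G x) \<in> borel_measurable borel"
proof -
  define \<Phi> where "\<Phi> = (\<lambda>x :: real^'n. LINT w | lborel. indicator cube w * kk K K' \<psi> \<mu> x w)"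
  have "(\<lambda>p. indicator cube (snd p) * kk K K' \<psi> \<mu> (fst p) (snd p)) \<in> borel_measurable (borel :: ((real^'n)\<times>(real^'n)) measure)"
  proof -
    have s1: "(\<lambda>p::(real^'n)\<times>(real^'n). snd p) \<in> borel_measurable borel"
      by (intro borel_measurable_continuous_onI continuous_intros)
    have s2: "(\<lambda>p::(real^'n)\<times>(real^'n). indicator cube (snd p) :: real) \<in> borel_measurable borel"
      using measurable_compose[OF s1 borel_measurable_indicator[of "cube::(real^'n) set" borel]] by (simp add: o_def)
    show ?thesis using borel_measurable_times[OF s2 kk_meas[OF cdf psi]] by simp
  qed
  moreover have "sets (borel \<Otimes>\<^sub>M lborel) = sets (borel :: ((real^'n)\<times>(real^'n)) measure)"
    by (simp only: sets_pair_measure_cong[OF refl sets_lborel] borel_prod)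
  ultimately have "(\<lambda>p. indicator cube (snd p) * kk K K' \<psi> \<mu> (fst p) (snd p)) \<in> borel_measurable (borel \<Otimes>\<^sub>M lborel)"
    using measurable_cong_sets[of "borel \<Otimes>\<^sub>M lborel" "borel :: ((real^'n)\<times>(real^'n)) measure" "borel :: real measure" borel] by simp
  then have "(\<lambda>x. LINT w | lborel. indicator cube w * kk K K' \<psi> \<mu> x w) \<in> borel_measurable (borel :: (real^'n) measure)"
    using lborel.borel_measurable_lebesgue_integral[of "\<lambda>x w. indicator cube w * kk K K' \<psi> \<mu> x w" borel] by (simp add: split_beta')
  then have mP: "\<Phi> \<in> borel_measurable borel" by (simp add: \<Phi>_def)
  have eq: "chi K K' \<psi> G x = \<Phi> x" if x: "x \<in> cube" for x
  proof -
    have "chi K K' \<psi> G x = (LINT w | lebesgue_on cube. kk K K' \<psi> \<mu> x w)"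
      unfolding chi_def by (rule Bochner_Integration.integral_cong) (use kk_eq[OF cdf x] in \<open>auto simp: lcube_space\<close>)
    also have "\<dots> = (LINT w | lebesgue. indicator cube w * kk K K' \<psi> \<mu> x w)"
      by (subst integral_restrict_space) auto
    also have "\<dots> = \<Phi> x" unfolding \<Phi>_def
    proof (rule integral_completion)
      show "(\<lambda>w. indicator cube w * kk K K' \<psi> \<mu> x w) \<in> borel_measurable lborel"
      proof -
        have "(\<lambda>w. indicator cube w * kk K K' \<psi> \<mu> x w) \<in> borel_measurable borel"
          by (rule borel_measurable_times[OF borel_measurable_indicator kk_meas_w[OF cdf psi]]) simp
        then show ?thesis using measurable_cong_sets[OF sets_lborel refl] by simp
      qed
    qed
    finally show ?thesis .
  qed
  have "(\<lambda>x. indicator cube x * chi K K' \<psi> G x) = (\<lambda>x. indicator cube x * \<Phi> x)"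
    using eq by (auto simp: indicator_def fun_eq_iff)
  then show ?thesis using mP by simp
qed



lemma int_rs:
  fixes f :: "real^'n::finite \<Rightarrow> real"
  assumes cdf: "cdf_of G \<mu>"
  shows "(LINT x | restrict_space \<mu> cube. f x) = (LINT x | \<mu>. indicator cube x * f x)"
  by (subst integral_restrict_space) (auto simp: cdf_basic(2,3)[OF cdf])

lemma mu_bound:
  fixes f :: "real^'n::finite \<Rightarrow> real"
  assumes cdf: "cdf_of G \<mu>" and fi: "integrable \<mu> (\<lambda>x. indicator cube x * f x)"
    and b: "\<And>x. x \<in> cube \<Longrightarrow> \<bar>f x\<bar> \<le> c"
  shows "\<bar>LINT x | restrict_space \<mu> cube. f x\<bar> \<le> c"
proof -
  have "\<bar>LINT x | \<mu>. indicator cube x * f x\<bar> \<le> (LINT x | \<mu>. c * indicator cube x)"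
  proof (rule integral_abs_bound_integral[OF fi])
    show "integrable \<mu> (\<lambda>x. c * indicator cube x)"
      by (auto intro!: integrable_mult_right integrable_real_indicator simp: cdf_basic(3,7)[OF cdf])
    fix x show "\<bar>indicator cube x * f x\<bar> \<le> c * indicator cube x"
      using b[of x] by (cases "x \<in> cube") auto
  qed
  also have "\<dots> = c" using cdf_basic(2,4)[OF cdf] by simp
  finally show ?thesis by (simp add: int_rs[OF cdf])
qed

lemma chi_F_cont:
  fixes \<psi> G :: "real^'n::finite \<Rightarrow> real"
  assumes "continuous_on cube \<psi>" "continuous_on cube G"
  shows "continuous_on cube (\<lambda>u. \<psi> u * marg K G u)"
  unfolding marg_mp
  by (intro continuous_on_mult assms(1) continuous_on_compose2[OF assms(2) mp_cont]) (auto intro: mp_in_cube)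

lemma chi_cont_G:
  fixes \<psi> G :: "real^'n::finite \<Rightarrow> real"
  assumes "continuous_on cube \<psi>" "continuous_on cube G"
  shows "continuous_on cube (chi K K' \<psi> G)"
proof -
  have "continuous_on cube (\<lambda>x. LINT w | lebesgue_on cube. (\<lambda>u. \<psi> u * marg K G u) (mix K' x w))"
    by (rule chi_cont[OF chi_F_cont[OF assms]])
  then show ?thesis unfolding chi_def[abs_def] by simp
qed

lemma chi_int_cont:
  fixes \<psi> G :: "real^'n::finite \<Rightarrow> real"
  assumes "continuous_on cube \<psi>" "continuous_on cube G" "x \<in> cube"
  shows "integrable (lebesgue_on cube) (\<lambda>w. \<psi> (mix K' x w) * marg K G (mix K' x w))"
  using continuous_imp_integrable[OF cont_mix_w[OF chi_F_cont[OF assms(1,2)] assms(3)]] by simp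

lemma chi_local: "(\<And>j. j \<in> K' \<Longrightarrow> x$j = y$j) \<Longrightarrow> chi K K' \<psi> G x = chi K K' \<psi> G y"
proof -
  assume "\<And>j. j \<in> K' \<Longrightarrow> x$j = y$j"
  then have "mix K' x w = mix K' y w" for w by (auto simp: mix_def vec_eq_iff)
  then show ?thesis by (simp add: chi_def)
qed

lemma ceilg_ug:
  assumes "m > 0" "0 \<le> x" "x \<le> 1"
  shows "x \<le> ceilg (ug m) x" "ceilg (ug m) x \<le> x + 1 / real m"
proof -
  note ub = ug_basic[OF assms(1)]
  note cp = ceilg_props[OF ub(1) ub(4) assms(3)]
  show "x \<le> ceilg (ug m) x" by (rule cp(2))
  define k where "k = nat \<lceil>real m * x\<rceil>"
  have mx: "0 \<le> real m * x" "real m * x \<le> real m" using assms by (auto simp: mult_left_le)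
  have kle: "k \<le> m" using mx unfolding k_def by (simp add: nat_le_iff ceiling_le_iff)
  have kr: "real k = of_int \<lceil>real m * x\<rceil>" using mx unfolding k_def by simp
  have "real k / real m \<in> ug m" using kle unfolding ug_def by auto
  moreover have "x \<le> real k / real m" using assms(1) kr by (simp add: le_divide_eq mult.commute)
  ultimately have "ceilg (ug m) x \<le> real k / real m" by (rule cp(3))
  also have "real k / real m \<le> x + 1 / real m"
  proof -
    have "real k \<le> real m * x + 1" using kr by linarith
    then have "real k / real m \<le> (real m * x + 1) / real m" using assms(1) by (simp add: divide_right_mono)
    also have "\<dots> = x + 1 / real m" using assms(1) by (simp add: field_simps)
    finally show ?thesis .
  qed
  finally show "ceilg (ug m) x \<le> x + 1 / real m" .
qed

lemma approx_close:
  fixes g :: "real^'n::finite \<Rightarrow> real"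
  assumes cont: "continuous_on cube g" and loc: "\<And>x y. (\<And>j. j \<in> S \<Longrightarrow> x$j = y$j) \<Longrightarrow> g x = g y"
    and e: "e > 0"
  shows "\<exists>M. \<forall>m\<ge>M. \<forall>x\<in>cube. \<bar>g x - g (\<chi> i. if i \<in> S then ceilg (ug (Suc m)) (x$i) else 1)\<bar> \<le> e"
proof -
  obtain d where d: "d > 0" "\<And>x y. x\<in>cube \<Longrightarrow> y\<in>cube \<Longrightarrow> (\<forall>i. \<bar>x$i - y$i\<bar> \<le> d) \<Longrightarrow> \<bar>g x - g y\<bar> < e"
    using unif_cont_cube[OF cont e] by blast
  obtain M :: nat where M: "1 / real (Suc M) < d" using nat_approx_posE[OF d(1)] by blast
  show ?thesis
  proof (intro exI[of _ M] allI impI ballI)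
    fix m x assume m: "m \<ge> M" and x: "x \<in> (cube :: (real^'n) set)"
    have x01: "\<And>i. 0 \<le> x$i \<and> x$i \<le> 1" using x by (simp add: mem_box_cart)
    have "1 / real (Suc m) \<le> 1 / real (Suc M)" using m by (simp add: frac_le)
    then have md: "1 / real (Suc m) < d" using M by simp
    define x' :: "real^'n" where "x' = (\<chi> i. if i \<in> S then x$i else 1)"
    define b :: "real^'n" where "b = (\<chi> i. if i \<in> S then ceilg (ug (Suc m)) (x$i) else 1)"
    have gx: "g x = g x'" by (rule loc) (simp add: x'_def)
    have cb: "\<And>i. x$i \<le> ceilg (ug (Suc m)) (x$i) \<and> ceilg (ug (Suc m)) (x$i) \<le> x$i + 1 / real (Suc m)"
      using ceilg_ug[of "Suc m"] x01 by simp
    have x'c: "x' \<in> cube" using x01 by (simp add: x'_def mem_box_cart)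
    have ub1: "ceilg (ug (Suc m)) (x$i) \<le> 1" for i
      using ceilg_props(1)[of "ug (Suc m)" "x$i"] ug_basic[of "Suc m"] x01 by force
    have bc: "b \<in> cube" using cb x01 ub1 by (auto simp: b_def mem_box_cart intro: order_trans)
    have "\<bar>x'$i - b$i\<bar> \<le> d" for i
    proof (cases "i \<in> S")
      case True
      have "x$i \<le> ceilg (ug (Suc m)) (x$i)" "ceilg (ug (Suc m)) (x$i) \<le> x$i + 1 / real (Suc m)" using cb[of i] by auto
      then show ?thesis using True md by (simp add: x'_def b_def abs_if)
    qed (use d(1) in \<open>simp add: x'_def b_def\<close>)
    then have "\<forall>i. \<bar>x'$i - b$i\<bar> \<le> d" by blast
    from d(2)[OF x'c bc this] show "\<bar>g x - g (\<chi> i. if i \<in> S then ceilg (ug (Suc m)) (x$i) else 1)\<bar> \<le> e"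
      using gx by (simp add: b_def)
  qed
qed

lemma eps_tendsto:
  fixes X :: "nat \<Rightarrow> real"
  assumes c: "c \<ge> 0" and H: "\<And>\<epsilon>. \<epsilon> > 0 \<Longrightarrow> eventually (\<lambda>n. \<bar>X n - L\<bar> \<le> c * \<epsilon>) sequentially"
  shows "X \<longlonglongrightarrow> L"
proof (rule tendstoI)
  fix e :: real assume e: "e > 0"
  define \<epsilon> where "\<epsilon> = e / (c + 1)"
  have ep: "\<epsilon> > 0" using e c by (simp add: \<epsilon>_def)
  have lt: "c * \<epsilon> < e" using e c by (simp add: \<epsilon>_def divide_less_eq field_simps)
  show "eventually (\<lambda>n. dist (X n) L < e) sequentially"
    using H[OF ep] by eventually_elim (use lt in \<open>auto simp: dist_real_def\<close>)
qed



definition St :: "'n::finite set \<Rightarrow> (real^'n \<Rightarrow> real) \<Rightarrow> ('n \<Rightarrow> real set) \<Rightarrow> (real^'n \<Rightarrow> real) \<Rightarrow> real" where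
  "St S g P F = (\<Sum>J\<in>Pow S. (-1) ^ card J * (\<Sum>a\<in>cells J P. vol J g a (\<lambda>j. nxt (P j) (a j)) * F (tau J a)))"

lemma St_tendsto:
  fixes g :: "real^'n::finite \<Rightarrow> real"
  assumes P: "grid S P" and conv: "\<And>u. u \<in> cube \<Longrightarrow> (\<lambda>n. Fn n u) \<longlonglongrightarrow> F u"
  shows "(\<lambda>n. St S g P (Fn n)) \<longlonglongrightarrow> St S g P F"
  unfolding St_def
proof (intro tendsto_sum tendsto_mult_left)
  fix J a assume J: "J \<in> Pow S" and a: "a \<in> cells J P"
  have "grid J P" using P J by (auto simp: grid_def)
  then show "(\<lambda>n. Fn n (tau J a)) \<longlonglongrightarrow> F (tau J a)" by (rule conv[OF tau_in_cube[OF _ a]])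
qed

lemma weak_conv:
  fixes g :: "real^'n::finite \<Rightarrow> real"
  assumes cdfn: "\<And>n. cdf_of (Fn n) (\<mu>n n)" and cdf: "cdf_of F \<mu>"
    and conv: "\<And>u. u \<in> cube \<Longrightarrow> (\<lambda>n. Fn n u) \<longlonglongrightarrow> F u" and cont: "continuous_on cube g"
  shows "(\<lambda>n. LINT x | restrict_space (\<mu>n n) cube. g x) \<longlonglongrightarrow> (LINT x | restrict_space \<mu> cube. g x)"
proof (rule tendstoI)
  fix e :: real assume e: "e > 0"
  then have e3: "e / 3 > 0" by simp
  have loc: "g x = g y" if xy: "\<And>j. j \<in> UNIV \<Longrightarrow> x$j = y$j" for x y
  proof -
    have "x = y" using xy by (simp add: vec_eq_iff)
    then show ?thesis by simp
  qed
  have "\<exists>M. \<forall>m\<ge>M. \<forall>x\<in>cube. \<bar>g x - g (\<chi> i. if i \<in> UNIV then ceilg (ug (Suc m)) (x$i) else 1)\<bar> \<le> e / 3"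
    by (rule approx_close[OF cont loc e3])
  then obtain M where M: "\<forall>m\<ge>M. \<forall>x\<in>cube. \<bar>g x - g (\<chi> i. if i \<in> UNIV then ceilg (ug (Suc m)) (x$i) else 1)\<bar> \<le> e / 3" ..
  define P where "P = (\<lambda>_::'n. ug (Suc M))"
  have G: "grid UNIV P" unfolding P_def by (rule grid_ug) simp
  have cl: "\<And>x. x \<in> cube \<Longrightarrow> \<bar>g x - g (\<chi> i. if i \<in> UNIV then ceilg (P i) (x$i) else 1)\<bar> \<le> e / 3"
    using M by (simp add: P_def)
  have a1: "\<bar>(LINT x | restrict_space (\<mu>n n) cube. g x) - St UNIV g P (Fn n)\<bar> \<le> e / 3" for n
    unfolding St_def by (rule int_approx[OF cdfn G integrable_cont_cube[OF cdfn cont] cl])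
  have a2: "\<bar>(LINT x | restrict_space \<mu> cube. g x) - St UNIV g P F\<bar> \<le> e / 3"
    unfolding St_def by (rule int_approx[OF cdf G integrable_cont_cube[OF cdf cont] cl])
  have "eventually (\<lambda>n. dist (St UNIV g P (Fn n)) (St UNIV g P F) < e / 3) sequentially"
    using tendstoD[OF St_tendsto[OF G conv] e3] .
  then show "eventually (\<lambda>n. dist (LINT x | restrict_space (\<mu>n n) cube. g x) (LINT x | restrict_space \<mu> cube. g x) < e) sequentially"
  proof eventually_elim
    case (elim n)
    then show ?case using a1[of n] a2 by (auto simp: dist_real_def abs_if split: if_split_asm)
  qed
qed


lemma chi_diff_bound:
  fixes \<psi> G1 G2 G3 :: "real^'n::finite \<Rightarrow> real"
  assumes x: "x \<in> cube"
    and i1: "integrable (lebesgue_on cube) (\<lambda>w. \<psi> (mix K' x w) * marg K G1 (mix K' x w))"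
    and i2: "integrable (lebesgue_on cube) (\<lambda>w. \<psi> (mix K' x w) * marg K G2 (mix K' x w))"
    and i3: "integrable (lebesgue_on cube) (\<lambda>w. \<psi> (mix K' x w) * marg K G3 (mix K' x w))"
    and bp: "\<And>u. u \<in> cube \<Longrightarrow> \<bar>\<psi> u\<bar> \<le> P"
    and bg: "\<And>u. u \<in> cube \<Longrightarrow> \<bar>G1 u - G2 u - c * G3 u\<bar> \<le> E"
  shows "\<bar>chi K K' \<psi> G1 x - chi K K' \<psi> G2 x - c * chi K K' \<psi> G3 x\<bar> \<le> P * E"
proof -
  have "chi K K' \<psi> G1 x - chi K K' \<psi> G2 x - c * chi K K' \<psi> G3 x =
     (LINT w | lebesgue_on cube. \<psi> (mix K' x w) * marg K G1 (mix K' x w) - \<psi> (mix K' x w) * marg K G2 (mix K' x w)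
        - c * (\<psi> (mix K' x w) * marg K G3 (mix K' x w)))"
    unfolding chi_def using i1 i2 i3 by simp
  also have "\<bar>\<dots>\<bar> \<le> P * E"
  proof (rule lcube_bound)
    show "integrable (lebesgue_on cube) (\<lambda>w. \<psi> (mix K' x w) * marg K G1 (mix K' x w) - \<psi> (mix K' x w) * marg K G2 (mix K' x w)
        - c * (\<psi> (mix K' x w) * marg K G3 (mix K' x w)))" using i1 i2 i3 by simp
    fix w :: "real^'n" assume w: "w \<in> cube"
    have m: "mix K' x w \<in> cube" by (rule mix_in_cube[OF x w])
    have mm: "mp K (mix K' x w) \<in> cube" by (rule mp_in_cube[OF m])
    have "\<bar>\<psi> (mix K' x w)\<bar> * \<bar>G1 (mp K (mix K' x w)) - G2 (mp K (mix K' x w)) - c * G3 (mp K (mix K' x w))\<bar> \<le> P * E"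
      by (rule mult_mono[OF bp[OF m] bg[OF mm]]) (use bp[OF m] in auto)
    then show "\<bar>\<psi> (mix K' x w) * marg K G1 (mix K' x w) - \<psi> (mix K' x w) * marg K G2 (mix K' x w)
        - c * (\<psi> (mix K' x w) * marg K G3 (mix K' x w))\<bar> \<le> P * E"
      by (simp add: marg_mp abs_mult[symmetric] algebra_simps)
  qed
  finally show ?thesis .
qed

lemma St_diff:
  "St S g P (\<lambda>u. F u + c * H u) - St S g P F = c * (\<Sum>J\<in>Pow S. (-1) ^ card J * rs_sum J H g P (tau J))"
  unfolding St_def rs_sum_def
  by (simp add: sum_subtractf[symmetric] sum_distrib_left distrib_left distrib_right algebra_simps)

lemma rs_seq:
  assumes "rs_has J f g I"
  shows "(\<lambda>m. rs_sum J f g (\<lambda>_. ug (Suc m)) (tau J)) \<longlonglongrightarrow> I"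
proof (rule tendstoI)
  fix e :: real assume e: "e > 0"
  obtain d where d: "d > 0" "\<And>P \<tau>. grid J P \<and> mfine J P d \<and> rs_tags J P \<tau> \<Longrightarrow> \<bar>rs_sum J f g P \<tau> - I\<bar> < e"
    using assms e unfolding rs_has_alt by metis
  obtain N :: nat where N: "1 / real (Suc N) < d" using nat_approx_posE[OF d(1)] by blast
  show "eventually (\<lambda>m. dist (rs_sum J f g (\<lambda>_. ug (Suc m)) (tau J)) I < e) sequentially"
    unfolding eventually_sequentially
  proof (intro exI[of _ N] allI impI)
    fix m assume m: "m \<ge> N"
    have G: "grid J (\<lambda>_. ug (Suc m))" by (rule grid_ug) simp
    have T: "rs_tags J (\<lambda>_. ug (Suc m)) (tau J)" by (rule tags_tau[OF G])
    have "1 / real (Suc m) \<le> 1 / real (Suc N)" using m by (simp add: frac_le)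
    then have F: "mfine J (\<lambda>_. ug (Suc m)) d" using N by (intro mfine_ug) auto
    show "dist (rs_sum J f g (\<lambda>_. ug (Suc m)) (tau J)) I < e"
      using d(2)[of "\<lambda>_. ug (Suc m)" "tau J"] G T F by (simp add: dist_real_def)
  qed
qed

lemma vitali_bound:
  fixes g :: "real^'n::finite \<Rightarrow> real"
  assumes bv: "hk_bv K' g" and J: "J \<subseteq> K'" and P: "grid J P"
  shows "(\<Sum>a\<in>cells J P. \<bar>vol J g a (\<lambda>j. nxt (P j) (a j))\<bar>) \<le>
     (if J = {} then \<bar>g (\<chi> i. 1)\<bar> else real_of_ereal (vitali_var J g))"
proof (cases "J = {}")
  case True
  then show ?thesis by (simp add: cells_def vol_def)
next
  case False
  have lt: "vitali_var J g < \<infinity>" using bv J False by (auto simp: hk_bv_def)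
  have le: "ereal (\<Sum>a\<in>cells J P. \<bar>vol J g a (\<lambda>j. nxt (P j) (a j))\<bar>) \<le> vitali_var J g"
    unfolding vitali_var_def by (rule SUP_upper) (use P in simp)
  obtain r where r: "vitali_var J g = ereal r" using lt le by (cases "vitali_var J g") auto
  show ?thesis using le False by (simp add: r)
qed



lemma chi_abs_bound:
  fixes \<psi> G :: "real^'n::finite \<Rightarrow> real"
  assumes x: "x \<in> cube"
    and i: "integrable (lebesgue_on cube) (\<lambda>w. \<psi> (mix K' x w) * marg K G (mix K' x w))"
    and bp: "\<And>u. u \<in> cube \<Longrightarrow> \<bar>\<psi> u\<bar> \<le> P"
    and bg: "\<And>u. u \<in> cube \<Longrightarrow> \<bar>G u\<bar> \<le> E"
  shows "\<bar>chi K K' \<psi> G x\<bar> \<le> P * E"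
  unfolding chi_def
proof (rule lcube_bound[OF i])
  fix w :: "real^'n" assume w: "w \<in> cube"
  have m: "mix K' x w \<in> cube" by (rule mix_in_cube[OF x w])
  have mm: "mp K (mix K' x w) \<in> cube" by (rule mp_in_cube[OF m])
  have "\<bar>\<psi> (mix K' x w)\<bar> * \<bar>G (mp K (mix K' x w))\<bar> \<le> P * E"
    by (rule mult_mono[OF bp[OF m] bg[OF mm]]) (use bp[OF m] in auto)
  then show "\<bar>\<psi> (mix K' x w) * marg K G (mix K' x w)\<bar> \<le> P * E" by (simp add: marg_mp abs_mult)
qed

lemma cdf_le1:
  assumes cdf: "cdf_of G \<mu>" and u: "u \<in> cube"
  shows "\<bar>G u\<bar> \<le> 1"
proof -
  have "G u = Gt \<mu> u" using cdf u by (simp add: cdf_of_def Gt_def)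
  then show ?thesis using Gt_bound[OF cdf] by simp
qed

lemma A_bound:
  fixes \<psi> C Cn h H :: "real^'n::finite \<Rightarrow> real"
  assumes cdfn: "cdf_of Cn \<mu>n" and psi: "continuous_on cube \<psi>"
    and bp: "\<And>u. u \<in> cube \<Longrightarrow> \<bar>\<psi> u\<bar> \<le> P"
    and Cc: "continuous_on cube C" and hc: "continuous_on cube h"
    and Cn_eq: "\<And>u. Cn u = C u + t * H u"
    and eps: "\<And>u. u \<in> cube \<Longrightarrow> \<bar>H u - h u\<bar> \<le> \<epsilon>"
  shows "\<bar>(LINT x | restrict_space \<mu>n cube. chi K K' \<psi> Cn x) - (LINT x | restrict_space \<mu>n cube. chi K K' \<psi> C x)
           - t * (LINT x | restrict_space \<mu>n cube. chi K K' \<psi> h x)\<bar> \<le> P * (\<bar>t\<bar> * \<epsilon>)"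
proof -
  have P0: "P \<ge> 0"
  proof -
    have "(0::real^'n) \<in> cube" by (simp add: mem_box_cart)
    from bp[OF this] show ?thesis by simp
  qed
  have i1: "integrable \<mu>n (\<lambda>x. indicator cube x * chi K K' \<psi> Cn x)"
  proof (rule integrable_bounded_cube[OF cdfn chi_meas[OF cdfn psi]])
    fix x :: "real^'n" assume x: "x \<in> cube"
    show "\<bar>chi K K' \<psi> Cn x\<bar> \<le> P * 1"
      by (rule chi_abs_bound[OF x chi_int_w[OF cdfn psi x] bp cdf_le1[OF cdfn]])
  qed
  have i2: "integrable \<mu>n (\<lambda>x. indicator cube x * chi K K' \<psi> C x)"
    by (rule integrable_cont_cube[OF cdfn chi_cont_G[OF psi Cc]])
  have i3: "integrable \<mu>n (\<lambda>x. indicator cube x * chi K K' \<psi> h x)"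
    by (rule integrable_cont_cube[OF cdfn chi_cont_G[OF psi hc]])
  have pw: "\<bar>chi K K' \<psi> Cn x - chi K K' \<psi> C x - t * chi K K' \<psi> h x\<bar> \<le> P * (\<bar>t\<bar> * \<epsilon>)" if x: "x \<in> cube" for x
  proof (rule chi_diff_bound[OF x chi_int_w[OF cdfn psi x] chi_int_cont[OF psi Cc x] chi_int_cont[OF psi hc x] bp])
    fix u :: "real^'n" assume u: "u \<in> cube"
    have "Cn u - C u - t * h u = t * (H u - h u)" by (simp add: Cn_eq algebra_simps)
    then show "\<bar>Cn u - C u - t * h u\<bar> \<le> \<bar>t\<bar> * \<epsilon>"
      using eps[OF u] by (simp add: abs_mult mult_left_mono)
  qed
  have "(LINT x | restrict_space \<mu>n cube. chi K K' \<psi> Cn x) - (LINT x | restrict_space \<mu>n cube. chi K K' \<psi> C x)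
           - t * (LINT x | restrict_space \<mu>n cube. chi K K' \<psi> h x)
      = (LINT x | \<mu>n. indicator cube x * (chi K K' \<psi> Cn x - chi K K' \<psi> C x - t * chi K K' \<psi> h x))"
  proof -
    have "(LINT x | \<mu>n. indicator cube x * (chi K K' \<psi> Cn x - chi K K' \<psi> C x - t * chi K K' \<psi> h x))
        = (LINT x | \<mu>n. indicator cube x * chi K K' \<psi> Cn x - indicator cube x * chi K K' \<psi> C x
             - t * (indicator cube x * chi K K' \<psi> h x))"
      by (simp add: algebra_simps)
    also have "\<dots> = (LINT x | \<mu>n. indicator cube x * chi K K' \<psi> Cn x) - (LINT x | \<mu>n. indicator cube x * chi K K' \<psi> C x)
             - t * (LINT x | \<mu>n. indicator cube x * chi K K' \<psi> h x)"
      using i1 i2 i3 by simp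
    finally show ?thesis by (simp add: int_rs[OF cdfn])
  qed
  also have "\<bar>\<dots>\<bar> \<le> P * (\<bar>t\<bar> * \<epsilon>)"
  proof -
    have "integrable \<mu>n (\<lambda>x. indicator cube x * (chi K K' \<psi> Cn x - chi K K' \<psi> C x - t * chi K K' \<psi> h x))"
      using i1 i2 i3 by (simp add: algebra_simps)
    from mu_bound[OF cdfn this pw] show ?thesis by (simp add: int_rs[OF cdfn])
  qed
  finally show ?thesis .
qed


lemma tri3: "\<bar>a - b\<bar> \<le> e / 2 \<Longrightarrow> \<bar>b - c\<bar> \<le> d \<Longrightarrow> \<bar>c - f\<bar> < e / 2 \<Longrightarrow> \<bar>a - f\<bar> \<le> d + e" for a b c d e f :: real
  by (auto simp: abs_if split: if_split_asm)

lemma B_bound: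
  fixes ch C Cn h H :: "real^'n::finite \<Rightarrow> real"
  assumes cdfn: "cdf_of Cn \<mu>n" and cdf: "cdf_of C \<mu>"
    and chic: "continuous_on cube ch" and loc: "\<And>x y. (\<And>j. j \<in> K' \<Longrightarrow> x$j = y$j) \<Longrightarrow> ch x = ch y"
    and Cn_eq: "\<And>u. Cn u = C u + t * H u" and t: "t \<noteq> 0"
    and eps: "\<And>u. u \<in> cube \<Longrightarrow> \<bar>H u - h u\<bar> \<le> \<epsilon>"
    and RS: "\<And>J. J \<in> Pow K' \<Longrightarrow> rs_has J h ch (I J)"
    and Vb: "\<And>J P. J \<in> Pow K' \<Longrightarrow> grid J P \<Longrightarrow> (\<Sum>a\<in>cells J P. \<bar>vol J ch a (\<lambda>j. nxt (P j) (a j))\<bar>) \<le> VJ J"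
  shows "\<bar>((LINT x | restrict_space \<mu>n cube. ch x) - (LINT x | restrict_space \<mu> cube. ch x)) / t
          - (\<Sum>J\<in>Pow K'. (-1) ^ card J * I J)\<bar> \<le> \<epsilon> * (\<Sum>J\<in>Pow K'. VJ J)"
proof (rule field_le_epsilon)
  fix e :: real assume e: "e > 0"
  define \<tau> where "\<tau> = \<bar>t\<bar>"
  have tau: "\<tau> > 0" using t by (simp add: \<tau>_def)
  have e1: "e * \<tau> / 4 > 0" using e tau by simp
  have "\<exists>M. \<forall>m\<ge>M. \<forall>x\<in>cube. \<bar>ch x - ch (\<chi> i. if i \<in> K' then ceilg (ug (Suc m)) (x$i) else 1)\<bar> \<le> e * \<tau> / 4"
    by (rule approx_close[OF chic loc e1])
  then obtain M1 where M1: "\<forall>m\<ge>M1. \<forall>x\<in>cube. \<bar>ch x - ch (\<chi> i. if i \<in> K' then ceilg (ug (Suc m)) (x$i) else 1)\<bar> \<le> e * \<tau> / 4" ..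
  have conv: "(\<lambda>m. \<Sum>J\<in>Pow K'. (-1) ^ card J * rs_sum J h ch (\<lambda>_. ug (Suc m)) (tau J)) \<longlonglongrightarrow> (\<Sum>J\<in>Pow K'. (-1) ^ card J * I J)"
    by (intro tendsto_sum tendsto_mult_left rs_seq RS)
  have e2: "e / 2 > 0" using e by simp
  have "eventually (\<lambda>m. dist (\<Sum>J\<in>Pow K'. (-1) ^ card J * rs_sum J h ch (\<lambda>_. ug (Suc m)) (tau J)) (\<Sum>J\<in>Pow K'. (-1) ^ card J * I J) < e / 2) sequentially"
    by (rule tendstoD[OF conv e2])
  then obtain M2 where M2: "\<forall>m\<ge>M2. dist (\<Sum>J\<in>Pow K'. (-1) ^ card J * rs_sum J h ch (\<lambda>_. ug (Suc m)) (tau J)) (\<Sum>J\<in>Pow K'. (-1) ^ card J * I J) < e / 2"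
    unfolding eventually_sequentially ..
  define m where "m = max M1 M2"
  define P where "P = (\<lambda>_::'n. ug (Suc m))"
  have G: "grid K' P" unfolding P_def by (rule grid_ug) simp
  have mM1: "m \<ge> M1" and mM2: "m \<ge> M2" by (simp_all add: m_def)
  have cl: "\<And>x. x \<in> cube \<Longrightarrow> \<bar>ch x - ch (\<chi> i. if i \<in> K' then ceilg (P i) (x$i) else 1)\<bar> \<le> e * \<tau> / 4"
    unfolding P_def by (rule M1[rule_format, OF mM1])
  define X where "X = (LINT x | restrict_space \<mu>n cube. ch x)"
  define Y where "Y = (LINT x | restrict_space \<mu> cube. ch x)"
  have a1: "\<bar>X - St K' ch P Cn\<bar> \<le> e * \<tau> / 4"
    unfolding St_def X_def by (rule int_approx[OF cdfn G integrable_cont_cube[OF cdfn chic] cl])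
  have a2: "\<bar>Y - St K' ch P C\<bar> \<le> e * \<tau> / 4"
    unfolding St_def Y_def by (rule int_approx[OF cdf G integrable_cont_cube[OF cdf chic] cl])
  define RH where "RH = (\<Sum>J\<in>Pow K'. (-1) ^ card J * rs_sum J H ch P (tau J))"
  define Rh where "Rh = (\<Sum>J\<in>Pow K'. (-1) ^ card J * rs_sum J h ch P (tau J))"
  have Cn_fun: "Cn = (\<lambda>u. C u + t * H u)" using Cn_eq by (simp add: fun_eq_iff)
  have st: "St K' ch P Cn - St K' ch P C = t * RH"
    unfolding Cn_fun RH_def by (rule St_diff)
  have rb: "\<bar>RH - Rh\<bar> \<le> \<epsilon> * (\<Sum>J\<in>Pow K'. VJ J)"
  proof -
    have "RH - Rh = (\<Sum>J\<in>Pow K'. (-1) ^ card J * rs_sum J (\<lambda>u. 1 * H u + (-1) * h u) ch P (tau J))"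
      unfolding RH_def Rh_def rs_sum_lin by (simp add: sum_subtractf[symmetric] algebra_simps)
    also have "\<bar>\<dots>\<bar> \<le> (\<Sum>J\<in>Pow K'. \<bar>(-1) ^ card J * rs_sum J (\<lambda>u. 1 * H u + (-1) * h u) ch P (tau J)\<bar>)"
      by (rule sum_abs)
    also have "\<dots> \<le> (\<Sum>J\<in>Pow K'. \<epsilon> * VJ J)"
    proof (rule sum_mono)
      fix J assume J: "J \<in> Pow K'"
      have GJ: "grid J P" using G J by (auto simp: grid_def)
      have "\<bar>rs_sum J (\<lambda>u. 1 * H u + (-1) * h u) ch P (tau J)\<bar> \<le> \<epsilon> * VJ J"
        by (rule rs_sum_bound[OF GJ tags_tau[OF GJ] _ Vb[OF J GJ]]) (use eps in simp)
      then show "\<bar>(-1) ^ card J * rs_sum J (\<lambda>u. 1 * H u + (-1) * h u) ch P (tau J)\<bar> \<le> \<epsilon> * VJ J"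
        by (simp add: abs_mult)
    qed
    also have "\<dots> = \<epsilon> * (\<Sum>J\<in>Pow K'. VJ J)" by (simp add: sum_distrib_left)
    finally show ?thesis .
  qed
  have rh: "\<bar>Rh - (\<Sum>J\<in>Pow K'. (-1) ^ card J * I J)\<bar> < e / 2"
    unfolding Rh_def P_def using M2[rule_format, OF mM2] by (simp add: dist_real_def)
  have q: "\<bar>(X - Y) / t - RH\<bar> \<le> e / 2"
  proof -
    have h1: "\<bar>X - Y - t * RH\<bar> \<le> e * \<tau> / 2" using a1 a2 st by (auto simp: abs_if split: if_split_asm)
    have "(X - Y) / t - RH = (X - Y - t * RH) / t" using t by (simp add: field_simps)
    then have "\<bar>(X - Y) / t - RH\<bar> = \<bar>X - Y - t * RH\<bar> / \<tau>" by (simp add: abs_divide \<tau>_def)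
    also have "\<dots> \<le> (e * \<tau> / 2) / \<tau>" by (rule divide_right_mono[OF h1]) (use tau in simp)
    finally have "\<bar>(X - Y) / t - RH\<bar> \<le> (e * \<tau> / 2) / \<tau>" .
    also have "\<dots> = e / 2" using tau by simp
    finally show ?thesis .
  qed
  show "\<bar>(X - Y) / t - (\<Sum>J\<in>Pow K'. (-1) ^ card J * I J)\<bar> \<le> \<epsilon> * (\<Sum>J\<in>Pow K'. VJ J) + e"
    by (rule tri3[OF q rb rh])
qed


lemma chi_lin:
  fixes \<psi> f g :: "real^'n::finite \<Rightarrow> real"
  assumes i1: "integrable (lebesgue_on cube) (\<lambda>w. \<psi> (mix K' x w) * marg K f (mix K' x w))"
    and i2: "integrable (lebesgue_on cube) (\<lambda>w. \<psi> (mix K' x w) * marg K g (mix K' x w))"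
  shows "chi K K' \<psi> (\<lambda>u. a * f u + b * g u) x = a * chi K K' \<psi> f x + b * chi K K' \<psi> g x"
proof -
  have "chi K K' \<psi> (\<lambda>u. a * f u + b * g u) x =
      (LINT w | lebesgue_on cube. a * (\<psi> (mix K' x w) * marg K f (mix K' x w)) + b * (\<psi> (mix K' x w) * marg K g (mix K' x w)))"
    unfolding chi_def by (simp add: marg_def algebra_simps)
  also have "\<dots> = a * chi K K' \<psi> f x + b * chi K K' \<psi> g x"
    unfolding chi_def using i1 i2 by simp
  finally show ?thesis .
qed

lemma int_lin_rs:
  fixes F G1 G2 :: "real^'n::finite \<Rightarrow> real"
  assumes cdf: "cdf_of C \<mu>"
    and i1: "integrable \<mu> (\<lambda>x. indicator cube x * G1 x)" and i2: "integrable \<mu> (\<lambda>x. indicator cube x * G2 x)"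
    and pw: "\<And>x. x \<in> cube \<Longrightarrow> F x = a * G1 x + b * G2 x"
  shows "(LINT x | restrict_space \<mu> cube. F x) = a * (LINT x | restrict_space \<mu> cube. G1 x) + b * (LINT x | restrict_space \<mu> cube. G2 x)"
proof -
  have "(LINT x | \<mu>. indicator cube x * F x) = (LINT x | \<mu>. a * (indicator cube x * G1 x) + b * (indicator cube x * G2 x))"
    by (rule Bochner_Integration.integral_cong[OF refl]) (auto simp: pw indicator_def algebra_simps)
  also have "\<dots> = a * (LINT x | \<mu>. indicator cube x * G1 x) + b * (LINT x | \<mu>. indicator cube x * G2 x)"
    using i1 i2 by simp
  finally show ?thesis by (simp add: int_rs[OF cdf])
qed



lemma div_bound: "\<bar>z\<bar> \<le> p * (\<bar>t\<bar> * e) \<Longrightarrow> t \<noteq> 0 \<Longrightarrow> \<bar>z / t\<bar> \<le> p * e" for z p t e :: real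
  by (simp add: abs_divide divide_le_eq mult_ac)

theorem lemma1:
  fixes \<psi> :: "real^'n::finite \<Rightarrow> real" and K K' :: "'n set" and C :: "real^'n \<Rightarrow> real"
  assumes "continuous_on (cbox 0 1) \<psi>"
    and "copula C"
    and "hk_bv K' (chi K K' \<psi> C)"
  shows "hadamard_diff_tangent (Psi K K' \<psi>) cdfs {h. continuous_on (cbox 0 1) h} C (Dpsi K K' \<psi> C)"
proof -
  note psi = assms(1) and cop = assms(2) and bv = assms(3)
  define \<mu> where "\<mu> = cdf_measure C"
  have cdf: "cdf_of C \<mu>" unfolding \<mu>_def using cop by (intro cdf_some) (simp add: copula_def)
  define ch where "ch = chi K K' \<psi> C"
  have Cc: "continuous_on cube C" by (rule copula_cont[OF cop])
  have chc: "continuous_on cube ch" unfolding ch_def by (rule chi_cont_G[OF psi Cc])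
  have loc: "ch x = ch y" if "\<And>j. j \<in> K' \<Longrightarrow> x$j = y$j" for x y
    unfolding ch_def by (rule chi_local[OF that])
  obtain \<Psi> where Psi0: "\<Psi> \<ge> 0" and Psib: "\<And>u. u \<in> cube \<Longrightarrow> \<bar>\<psi> u\<bar> \<le> \<Psi>"
    using psi_bound[OF psi] by blast
  define VJ where "VJ J = (if J = {} then \<bar>ch (\<chi> i. 1)\<bar> else real_of_ereal (vitali_var J ch))" for J
  have Vb: "(\<Sum>a\<in>cells J P. \<bar>vol J ch a (\<lambda>j. nxt (P j) (a j))\<bar>) \<le> VJ J" if "J \<in> Pow K'" "grid J P" for J P
    unfolding VJ_def using vitali_bound[OF bv[folded ch_def] _ that(2)] that(1) by simp
  have VJ0: "VJ J \<ge> 0" if "J \<in> Pow K'" for J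
  proof -
    have G: "grid J (\<lambda>_. ug 1)" by (rule grid_ug) simp
    have "0 \<le> (\<Sum>a\<in>cells J (\<lambda>_. ug 1). \<bar>vol J ch a (\<lambda>j. nxt ((\<lambda>_. ug 1) j) (a j))\<bar>)" by (rule sum_nonneg) simp
    also have "\<dots> \<le> VJ J" by (rule Vb[OF that G])
    finally show ?thesis .
  qed
  have RS: "rs_has J f ch (rs_int J f ch)" if "J \<in> Pow K'" "continuous_on cube f" for J f
    by (rule rs_exists[OF that(2) Vb[OF that(1)]])
  define VS where "VS = (\<Sum>J\<in>Pow K'. VJ J)"
  have VS0: "VS \<ge> 0" unfolding VS_def by (rule sum_nonneg) (rule VJ0)
  have Dpsi_eq: "Dpsi K K' \<psi> C f = (LINT x | restrict_space \<mu> cube. chi K K' \<psi> f x)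
      + (\<Sum>J\<in>Pow K'. (-1) ^ card J * rs_int J f ch)" for f
    by (simp add: Dpsi_def \<mu>_def ch_def)
  show ?thesis
    unfolding hadamard_diff_tangent_def
  proof (intro conjI)
    show "\<forall>f\<in>{h. continuous_on cube h}. \<forall>g\<in>{h. continuous_on cube h}. \<forall>a b.
        Dpsi K K' \<psi> C (\<lambda>u. a * f u + b * g u) = a * Dpsi K K' \<psi> C f + b * Dpsi K K' \<psi> C g"
    proof (intro ballI allI)
      fix f g :: "real^'n \<Rightarrow> real" and a b :: real
      assume "f \<in> {h. continuous_on cube h}" "g \<in> {h. continuous_on cube h}"
      then have fc: "continuous_on cube f" and gc: "continuous_on cube g" by auto
      have I1: "(LINT x | restrict_space \<mu> cube. chi K K' \<psi> (\<lambda>u. a * f u + b * g u) x)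
          = a * (LINT x | restrict_space \<mu> cube. chi K K' \<psi> f x) + b * (LINT x | restrict_space \<mu> cube. chi K K' \<psi> g x)"
        by (rule int_lin_rs[OF cdf integrable_cont_cube[OF cdf chi_cont_G[OF psi fc]] integrable_cont_cube[OF cdf chi_cont_G[OF psi gc]]])
           (rule chi_lin[OF chi_int_cont[OF psi fc] chi_int_cont[OF psi gc]])
      have I2: "rs_int J (\<lambda>u. a * f u + b * g u) ch = a * rs_int J f ch + b * rs_int J g ch" if "J \<in> Pow K'" for J
        by (rule rs_int_eq[OF rs_has_lin[OF RS[OF that fc] RS[OF that gc]]])
      have I3: "(\<Sum>J\<in>Pow K'. (-1) ^ card J * rs_int J (\<lambda>u. a * f u + b * g u) ch)
          = a * (\<Sum>J\<in>Pow K'. (-1) ^ card J * rs_int J f ch) + b * (\<Sum>J\<in>Pow K'. (-1) ^ card J * rs_int J g ch)"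
      proof -
        have "(\<Sum>J\<in>Pow K'. (-1) ^ card J * rs_int J (\<lambda>u. a * f u + b * g u) ch)
           = (\<Sum>J\<in>Pow K'. a * ((-1) ^ card J * rs_int J f ch) + b * ((-1) ^ card J * rs_int J g ch))"
          by (rule sum.cong[OF refl]) (simp add: I2 algebra_simps)
        then show ?thesis by (simp add: sum.distrib sum_distrib_left)
      qed
      show "Dpsi K K' \<psi> C (\<lambda>u. a * f u + b * g u) = a * Dpsi K K' \<psi> C f + b * Dpsi K K' \<psi> C g"
        unfolding Dpsi_eq I1 I3 by (simp add: algebra_simps)
    qed
  next
    show "\<exists>B. \<forall>f\<in>{h. continuous_on cube h}. \<bar>Dpsi K K' \<psi> C f\<bar> \<le> B * (SUP u\<in>cube. \<bar>f u\<bar>)"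
    proof (intro exI[of _ "\<Psi> + VS"] ballI)
      fix f :: "real^'n \<Rightarrow> real" assume "f \<in> {h. continuous_on cube h}"
      then have fc: "continuous_on cube f" by auto
      define s where "s = (SUP u\<in>cube. \<bar>f u\<bar>)"
      obtain Bf where Bf: "\<And>u. u \<in> cube \<Longrightarrow> \<bar>f u\<bar> \<le> Bf" using psi_bound[OF fc] by blast
      have bdd: "bdd_above ((\<lambda>u. \<bar>f u\<bar>) ` cube)" unfolding bdd_above_def using Bf by blast
      have fs: "\<bar>f u\<bar> \<le> s" if "u \<in> cube" for u unfolding s_def by (rule cSUP_upper[OF that bdd])
      have b1: "\<bar>LINT x | restrict_space \<mu> cube. chi K K' \<psi> f x\<bar> \<le> \<Psi> * s"
        by (rule mu_bound[OF cdf integrable_cont_cube[OF cdf chi_cont_G[OF psi fc]]])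
           (rule chi_abs_bound[OF _ chi_int_cont[OF psi fc] Psib fs])
      have b2: "\<bar>\<Sum>J\<in>Pow K'. (-1) ^ card J * rs_int J f ch\<bar> \<le> s * VS"
      proof -
        have "\<bar>\<Sum>J\<in>Pow K'. (-1) ^ card J * rs_int J f ch\<bar> \<le> (\<Sum>J\<in>Pow K'. \<bar>(-1) ^ card J * rs_int J f ch\<bar>)"
          by (rule sum_abs)
        also have "\<dots> \<le> (\<Sum>J\<in>Pow K'. s * VJ J)"
        proof (rule sum_mono)
          fix J assume J: "J \<in> Pow K'"
          have "\<bar>rs_int J f ch\<bar> \<le> s * VJ J" by (rule rs_has_bound[OF RS[OF J fc] fs Vb[OF J]])
          then show "\<bar>(-1) ^ card J * rs_int J f ch\<bar> \<le> s * VJ J" by (simp add: abs_mult)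
        qed
        also have "\<dots> = s * VS" by (simp add: VS_def sum_distrib_left)
        finally show ?thesis .
      qed
      have "\<bar>Dpsi K K' \<psi> C f\<bar> \<le> \<bar>LINT x | restrict_space \<mu> cube. chi K K' \<psi> f x\<bar> + \<bar>\<Sum>J\<in>Pow K'. (-1) ^ card J * rs_int J f ch\<bar>"
        unfolding Dpsi_eq by (rule abs_triangle_ineq)
      also have "\<dots> \<le> \<Psi> * s + s * VS" using b1 b2 by simp
      also have "\<dots> = (\<Psi> + VS) * s" by (simp add: algebra_simps)
      finally show "\<bar>Dpsi K K' \<psi> C f\<bar> \<le> (\<Psi> + VS) * (SUP u\<in>cube. \<bar>f u\<bar>)" by (simp add: s_def)
    qed
  next
    show "\<forall>t hs h. (\<forall>n. t n \<noteq> 0) \<longrightarrow> t \<longlonglongrightarrow> 0 \<longrightarrow> h \<in> {h. continuous_on cube h} \<longrightarrow>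
        uniform_limit cube hs h sequentially \<longrightarrow> (\<forall>n. (\<lambda>u. C u + t n * hs n u) \<in> cdfs) \<longrightarrow>
        (\<lambda>n. (Psi K K' \<psi> (\<lambda>u. C u + t n * hs n u) - Psi K K' \<psi> C) / t n) \<longlonglongrightarrow> Dpsi K K' \<psi> C h"
    proof (intro allI impI)
      fix t :: "nat \<Rightarrow> real" and hs :: "nat \<Rightarrow> real^'n \<Rightarrow> real" and h :: "real^'n \<Rightarrow> real"
      assume tn0: "\<forall>n. t n \<noteq> 0" and t0: "t \<longlonglongrightarrow> 0" and hT: "h \<in> {h. continuous_on cube h}"
        and ul: "uniform_limit cube hs h sequentially" and dom: "\<forall>n. (\<lambda>u. C u + t n * hs n u) \<in> cdfs"
      have hc: "continuous_on cube h" using hT by simp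
      define Cn where "Cn n = (\<lambda>u. C u + t n * hs n u)" for n
      define \<mu>n where "\<mu>n n = cdf_measure (Cn n)" for n
      have cdfn: "cdf_of (Cn n) (\<mu>n n)" for n unfolding \<mu>n_def Cn_def using dom by (intro cdf_some) simp
      have Cn_eq: "Cn n u = C u + t n * hs n u" for n u by (simp add: Cn_def)
      define An where "An n = ((LINT x | restrict_space (\<mu>n n) cube. chi K K' \<psi> (Cn n) x)
          - (LINT x | restrict_space (\<mu>n n) cube. ch x)) / t n" for n
      define Bn where "Bn n = ((LINT x | restrict_space (\<mu>n n) cube. ch x) - (LINT x | restrict_space \<mu> cube. ch x)) / t n" for n
      define Yn where "Yn n = (LINT x | restrict_space (\<mu>n n) cube. chi K K' \<psi> h x)" for n
      define D1 where "D1 = (LINT x | restrict_space \<mu> cube. chi K K' \<psi> h x)"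
      define D2 where "D2 = (\<Sum>J\<in>Pow K'. (-1) ^ card J * rs_int J h ch)"
      have unif: "eventually (\<lambda>n. \<forall>u\<in>cube. \<bar>hs n u - h u\<bar> \<le> \<epsilon>) sequentially" if "\<epsilon> > 0" for \<epsilon>
        using uniform_limitD[OF ul that] by eventually_elim (auto simp: dist_real_def less_imp_le)
      have conv: "(\<lambda>n. Cn n u) \<longlonglongrightarrow> C u" if u: "u \<in> cube" for u
      proof -
        have "(\<lambda>n. hs n u) \<longlonglongrightarrow> h u" by (rule tendsto_uniform_limitI[OF ul u])
        then have "(\<lambda>n. t n * hs n u) \<longlonglongrightarrow> 0 * h u" by (rule tendsto_mult[OF t0])
        then have "(\<lambda>n. C u + t n * hs n u) \<longlonglongrightarrow> C u + 0 * h u" by (rule tendsto_add[OF tendsto_const])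
        then show ?thesis by (simp add: Cn_def)
      qed
      have Yconv: "Yn \<longlonglongrightarrow> D1"
        unfolding Yn_def D1_def by (rule weak_conv[OF cdfn cdf conv chi_cont_G[OF psi hc]])
      have AY: "(\<lambda>n. An n - Yn n) \<longlonglongrightarrow> 0"
      proof (rule eps_tendsto[OF Psi0])
        fix \<epsilon> :: real assume e: "\<epsilon> > 0"
        show "eventually (\<lambda>n. \<bar>An n - Yn n - 0\<bar> \<le> \<Psi> * \<epsilon>) sequentially"
          using unif[OF e]
        proof eventually_elim
          case (elim n)
          have ab: "\<bar>(LINT x | restrict_space (\<mu>n n) cube. chi K K' \<psi> (Cn n) x) - (LINT x | restrict_space (\<mu>n n) cube. chi K K' \<psi> C x)
             - t n * (LINT x | restrict_space (\<mu>n n) cube. chi K K' \<psi> h x)\<bar> \<le> \<Psi> * (\<bar>t n\<bar> * \<epsilon>)"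
            by (rule A_bound[OF cdfn psi Psib Cc hc Cn_eq]) (use elim in auto)
          have tn: "t n \<noteq> 0" using tn0 by simp
          have "An n - Yn n = ((LINT x | restrict_space (\<mu>n n) cube. chi K K' \<psi> (Cn n) x) - (LINT x | restrict_space (\<mu>n n) cube. chi K K' \<psi> C x)
             - t n * (LINT x | restrict_space (\<mu>n n) cube. chi K K' \<psi> h x)) / t n"
            unfolding An_def Yn_def ch_def using tn by (simp add: field_simps)
          then show ?case using div_bound[OF ab tn] by simp
        qed
      qed
      have Aconv: "An \<longlonglongrightarrow> D1"
      proof -
        have "(\<lambda>n. (An n - Yn n) + Yn n) \<longlonglongrightarrow> 0 + D1" by (rule tendsto_add[OF AY Yconv])
        then show ?thesis by simp
      qed
      have Bconv: "Bn \<longlonglongrightarrow> D2"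
      proof (rule eps_tendsto[OF VS0])
        fix \<epsilon> :: real assume e: "\<epsilon> > 0"
        show "eventually (\<lambda>n. \<bar>Bn n - D2\<bar> \<le> VS * \<epsilon>) sequentially"
          using unif[OF e]
        proof eventually_elim
          case (elim n)
          have tn: "t n \<noteq> 0" using tn0 by simp
          have "\<bar>Bn n - D2\<bar> \<le> \<epsilon> * (\<Sum>J\<in>Pow K'. VJ J)"
            unfolding Bn_def D2_def
            by (rule B_bound[OF cdfn cdf chc loc Cn_eq tn _ RS[OF _ hc] Vb]) (use elim in auto)
          then show ?case by (simp add: VS_def mult.commute)
        qed
      qed
      have Q: "(Psi K K' \<psi> (\<lambda>u. C u + t n * hs n u) - Psi K K' \<psi> C) / t n = An n + Bn n" for n
        by (simp add: Psi_def An_def Bn_def \<mu>n_def Cn_def \<mu>_def ch_def diff_divide_distrib)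
      have "(\<lambda>n. An n + Bn n) \<longlonglongrightarrow> D1 + D2" by (rule tendsto_add[OF Aconv Bconv])
      moreover have "Dpsi K K' \<psi> C h = D1 + D2" by (simp add: Dpsi_eq D1_def D2_def)
      ultimately show "(\<lambda>n. (Psi K K' \<psi> (\<lambda>u. C u + t n * hs n u) - Psi K K' \<psi> C) / t n) \<longlonglongrightarrow> Dpsi K K' \<psi> C h"
        unfolding Q by simp
    qed
  qed
qed

end
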